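(* Let $n=p+q$, let $h^1,\dots,h^n:\mathbb{R}^{p,q}\to\mathcal{C}\ell_{\circledS}(p,q)$ be a Clifford field vector and $C_1,\dots,C_n:\mathbb{R}^{p,q}\to\mathcal{C}\ell_{\circledS}(p,q)$ (all with continuous partial derivatives up to second order) satisfying $\partial_\mu h_\rho-[C_\mu,h_\rho]=0$ for all $\mu,\rho$. Let $\sigma,\varepsilon\in\mathbb{C}$ with $\varepsilon=4(n-1)\sigma^3$. Define $B_\mu=\sigma h_\mu+C_\mu$ and $G_{\mu\nu}=\partial_\mu B_\nu-\partial_\nu B_\mu-[B_\mu,B_\nu]$. Then $B_\mu\in\mathcal{C}\ell_{\circledS}(p,q)$ and the Yang–Mills equations $$\partial_\mu B_\nu-\partial_\nu B_\mu-[B_\mu,B_\nu]=G_{\mu\nu},\qquad \partial_\mu G^{\mu\nu}-[B_\mu,G^{\mu\nu}]=\varepsilon h^\nu\quad(\nu=1,\dots,n)$$ hold, where $G^{\mu\nu}=\eta^{\mu\alpha}\eta^{\nu\beta}G_{\alpha\beta}$ and summation over $\mu$ is implied.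
   Context: $\mathbb{R}^{p,q}$ is $\mathbb{R}^n$ with Cartesian coordinates $x^\mu$, $\partial_\mu=\partial/\partial x^\mu$, metric $\eta=(\eta_{\mu\nu})=(\eta^{\mu\nu})=\mathrm{diag}(1,\dots,1,-1,\dots,-1)$ ($p$ ones, $q$ minus ones); indices are lowered/raised with $\eta$ (e.g. $h_\mu=\eta_{\mu\nu}h^\nu$) and Einstein summation is used. $\mathcal{C}\ell(p,q)$ is the complex Clifford algebra with identity $e$ and generators $e^1,\dots,e^n$, $e^ae^b+e^be^a=2\eta^{ab}e$, with basis $e$, $e^{a_1\dots a_k}=e^{a_1}\cdots e^{a_k}$ ($a_1<\dots<a_k$); functions into it are differentiated coefficientwise. $[U,V]=UV-VU$. $\mathrm{Tr}(U)$ is the coefficient of $e$. The center is spanned by $e$ for even $n$ and by $e,e^{1\dots n}$ for odd $n$; $\mathcal{C}\ell_{\circledS}(p,q)$ is the set of elements with zero projection onto the center. A Clifford field vector is a collection $h^\mu:\mathbb{R}^{p,q}\to\mathcal{C}\ell(p,q)$, $\mu=1,\dots,n$, with $h^\mu h^\nu+h^\nu h^\mu=2\eta^{\mu\nu}e$ and $\mathrm{Tr}(h^1\cdots h^n)=0$ at every point. *)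

theory Defs
  imports "HOL-Analysis.Analysis"
begin

text \<open>Points of R^{p,q} are
  functions x :: nat => real with x i = 0 for i outside {1..n}; the space carries the
  subspace topology of the product topology (= the Euclidean topology).
  An element of the complex Clifford algebra Cl(p,q) is represented by its coefficient
  function U :: nat set => complex on the basis e^A, A a subset of {1..n}
  (e^{} = e, e^{a1..ak} = e^{a1}...e^{ak} for a1 < ... < ak), with U A = 0 for A not
  a subset of {1..n}.\<close>

type_synonym cl = "nat set \<Rightarrow> complex"
type_synonym point = "nat \<Rightarrow> real"

definition eta :: "nat \<Rightarrow> nat \<Rightarrow> nat \<Rightarrow> complex" where
  "eta p a b = (if a = b then (if a \<le> p then 1 else -1) else 0)"

definition Rpq :: "nat \<Rightarrow> nat \<Rightarrow> point set" where
  "Rpq p q = {x. \<forall>i. i \<notin> {1..p+q} \<longrightarrow> x i = 0}"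

definition cl_carrier :: "nat \<Rightarrow> nat \<Rightarrow> cl set" where
  "cl_carrier p q = {U. \<forall>A. \<not> A \<subseteq> {1..p+q} \<longrightarrow> U A = 0}"

text \<open>Sign in the product of basis elements: e^A e^B = clsign A B e^{A symdiff B}.\<close>
definition clsign :: "nat \<Rightarrow> nat set \<Rightarrow> nat set \<Rightarrow> complex" where
  "clsign p A B = (-1) ^ card {(a, b). a \<in> A \<and> b \<in> B \<and> b < a} * (\<Prod>c\<in>A \<inter> B. eta p c c)"

definition clmul :: "nat \<Rightarrow> nat \<Rightarrow> cl \<Rightarrow> cl \<Rightarrow> cl" where
  "clmul p q U V = (\<lambda>C. \<Sum>A\<in>Pow {1..p+q}. \<Sum>B\<in>Pow {1..p+q}.
      if (A - B) \<union> (B - A) = C then clsign p A B * U A * V B else 0)"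

definition clone :: cl where
  "clone = (\<lambda>A. if A = {} then 1 else 0)"

definition clgen :: "nat \<Rightarrow> cl" where
  "clgen a = (\<lambda>A. if A = {a} then 1 else 0)"

definition cladd :: "cl \<Rightarrow> cl \<Rightarrow> cl" where
  "cladd U V = (\<lambda>A. U A + V A)"

definition clsub :: "cl \<Rightarrow> cl \<Rightarrow> cl" where
  "clsub U V = (\<lambda>A. U A - V A)"

definition clscale :: "complex \<Rightarrow> cl \<Rightarrow> cl" where
  "clscale c U = (\<lambda>A. c * U A)"

definition comm :: "nat \<Rightarrow> nat \<Rightarrow> cl \<Rightarrow> cl \<Rightarrow> cl" where
  "comm p q U V = clsub (clmul p q U V) (clmul p q V U)"

definition Tr :: "cl \<Rightarrow> complex" where
  "Tr U = U {}"

definition clprod :: "nat \<Rightarrow> nat \<Rightarrow> cl list \<Rightarrow> cl" where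
  "clprod p q Us = foldr (clmul p q) Us clone"

text \<open>Cl_S(p,q): elements of Cl(p,q) with zero projection onto the center
  (center spanned by e for even n, by e and e^{1..n} for odd n).\<close>
definition cl_S :: "nat \<Rightarrow> nat \<Rightarrow> cl set" where
  "cl_S p q = {U \<in> cl_carrier p q. U {} = 0 \<and> (odd (p+q) \<longrightarrow> U {1..p+q} = 0)}"

definition has_pd :: "nat \<Rightarrow> (point \<Rightarrow> complex) \<Rightarrow> point \<Rightarrow> bool" where
  "has_pd mu f x = ((\<lambda>t. f (x(mu := t))) differentiable (at (x mu)))"

definition pd :: "nat \<Rightarrow> (point \<Rightarrow> complex) \<Rightarrow> point \<Rightarrow> complex" where
  "pd mu f x = vector_derivative (\<lambda>t. f (x(mu := t))) (at (x mu))"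

definition cpd :: "nat \<Rightarrow> (point \<Rightarrow> cl) \<Rightarrow> point \<Rightarrow> cl" where
  "cpd mu F x = (\<lambda>A. pd mu (\<lambda>y. F y A) x)"

definition C2_scalar :: "nat \<Rightarrow> nat \<Rightarrow> (point \<Rightarrow> complex) \<Rightarrow> bool" where
  "C2_scalar p q f \<longleftrightarrow>
     continuous_on (Rpq p q) f \<and>
     (\<forall>mu\<in>{1..p+q}. (\<forall>x\<in>Rpq p q. has_pd mu f x) \<and> continuous_on (Rpq p q) (pd mu f)) \<and>
     (\<forall>mu\<in>{1..p+q}. \<forall>nu\<in>{1..p+q}.
        (\<forall>x\<in>Rpq p q. has_pd nu (pd mu f) x) \<and> continuous_on (Rpq p q) (pd nu (pd mu f)))"

definition C2_cl :: "nat \<Rightarrow> nat \<Rightarrow> (point \<Rightarrow> cl) \<Rightarrow> bool" where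
  "C2_cl p q F \<longleftrightarrow> (\<forall>A. C2_scalar p q (\<lambda>x. F x A))"

text \<open>Clifford field vector h^1..h^n (upper indices).\<close>
definition clifford_field_vector :: "nat \<Rightarrow> nat \<Rightarrow> (nat \<Rightarrow> point \<Rightarrow> cl) \<Rightarrow> bool" where
  "clifford_field_vector p q h \<longleftrightarrow>
     (\<forall>x\<in>Rpq p q.
        (\<forall>mu\<in>{1..p+q}. h mu x \<in> cl_carrier p q) \<and>
        (\<forall>mu\<in>{1..p+q}. \<forall>nu\<in>{1..p+q}.
           cladd (clmul p q (h mu x) (h nu x)) (clmul p q (h nu x) (h mu x))
             = clscale (2 * eta p mu nu) clone) \<and>
        Tr (clprod p q (map (\<lambda>mu. h mu x) [1..<p+q+1])) = 0)"

end

theory Submission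
  imports Defs "HOL-Library.Function_Algebras"
begin


abbreviation symd :: "'a set \<Rightarrow> 'a set \<Rightarrow> 'a set" where "symd A B \<equiv> (A - B) \<union> (B - A)"

lemma prod_symd:
  assumes "finite X" "finite Y" "\<And>x. g x * g x = (1::'b::comm_ring_1)"
  shows "prod g (symd X Y) = prod g X * prod g Y"
proof -
  have 1: "prod g X = prod g (X - Y) * prod g (X \<inter> Y)"
    using prod.subset_diff[of "X \<inter> Y" X g] assms by (simp add: Diff_Int)
  have 2: "prod g Y = prod g (Y - X) * prod g (X \<inter> Y)"
    using prod.subset_diff[of "X \<inter> Y" Y g] assms by (simp add: Diff_Int Int_commute)
  have 3: "prod g (X \<inter> Y) * prod g (X \<inter> Y) = 1"
    by (simp add: prod.distrib[symmetric] assms)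
  have 4: "prod g (symd X Y) = prod g (X - Y) * prod g (Y - X)"
    by (rule prod.union_disjoint) (use assms in auto)
  show ?thesis unfolding 1 2 4
    by (metis (no_types, lifting) 3 mult.assoc mult.commute mult.right_neutral)
qed

definition invs :: "nat set \<Rightarrow> nat set \<Rightarrow> (nat \<times> nat) set" where
  "invs A B = {(a,b). a \<in> A \<and> b \<in> B \<and> b < a}"

lemma finite_invs: "finite A \<Longrightarrow> finite B \<Longrightarrow> finite (invs A B)"
  by (rule finite_subset[of _ "A \<times> B"]) (auto simp: invs_def)

lemma clsign_alt: "clsign p A B = prod (\<lambda>_. -1) (invs A B) * prod (\<lambda>c. eta p c c) (A \<inter> B)"
  by (simp add: clsign_def invs_def)

lemma eta_sq: "eta p c c * eta p c c = 1" by (simp add: eta_def)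

lemma invs_symd1: "invs (symd A B) E = symd (invs A E) (invs B E)"
  by (auto simp: invs_def)
lemma invs_symd2: "invs A (symd B E) = symd (invs A B) (invs A E)"
  by (auto simp: invs_def)
lemma int_symd1: "symd A B \<inter> E = symd (A \<inter> E) (B \<inter> E)" by auto
lemma int_symd2: "A \<inter> symd B E = symd (A \<inter> B) (A \<inter> E)" by auto

lemma clsign_cocycle:
  assumes "finite A" "finite B" "finite E"
  shows "clsign p A B * clsign p (symd A B) E = clsign p A (symd B E) * clsign p B E"
proof -
  have m: "\<And>X Y. finite X \<Longrightarrow> finite Y \<Longrightarrow> (-1::complex) ^ card (symd X Y) = (-1) ^ card X * (-1) ^ card Y"
    using prod_symd[of _ _ "\<lambda>_. -1::complex"] by simp
  note fi = finite_invs assms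
  have e: "\<And>X Y. finite X \<Longrightarrow> finite Y \<Longrightarrow> (\<Prod>c\<in>symd X Y. eta p c c) = (\<Prod>c\<in>X. eta p c c) * (\<Prod>c\<in>Y. eta p c c)"
    by (rule prod_symd) (auto simp: eta_sq)
  show ?thesis
    unfolding clsign_alt invs_symd1 invs_symd2 int_symd1 int_symd2
    using fi by (simp add: m e fi mult_ac)
qed

lemma symd_Pow: "A \<in> Pow S \<Longrightarrow> B \<in> Pow S \<Longrightarrow> symd A B \<in> Pow S" by auto

lemma sum_delta_cond:
  assumes "finite S"
  shows "(\<Sum>C\<in>S. if a = C \<and> P C then f C else 0) = (if a \<in> S \<and> P a then f a else (0::'b::comm_monoid_add))"
proof -
  have "(\<Sum>C\<in>S. if a = C \<and> P C then f C else 0) = (\<Sum>C\<in>S. if a = C then (if P C then f C else 0) else 0)"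
    by (rule sum.cong) auto
  also have "\<dots> = (if a \<in> S then (if P a then f a else 0) else 0)" by (simp add: sum.delta' assms)
  finally show ?thesis by auto
qed

lemma swap3: "(\<Sum>F\<in>S. \<Sum>B\<in>S. \<Sum>E\<in>S. f F B E) = (\<Sum>B\<in>S. \<Sum>E\<in>S. \<Sum>F\<in>S. f F B E)"
proof -
  have "(\<Sum>F\<in>S. \<Sum>B\<in>S. \<Sum>E\<in>S. f F B E) = (\<Sum>B\<in>S. \<Sum>F\<in>S. \<Sum>E\<in>S. f F B E)" by (rule sum.swap)
  also have "\<dots> = (\<Sum>B\<in>S. \<Sum>E\<in>S. \<Sum>F\<in>S. f F B E)" by (rule sum.cong[OF refl], rule sum.swap)
  finally show ?thesis .
qed

lemma swap3': "(\<Sum>C\<in>S. \<Sum>E\<in>S. \<Sum>B\<in>S. f C E B) = (\<Sum>B\<in>S. \<Sum>E\<in>S. \<Sum>C\<in>S. f C E B)"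
proof -
  have "(\<Sum>C\<in>S. \<Sum>E\<in>S. \<Sum>B\<in>S. f C E B) = (\<Sum>C\<in>S. \<Sum>B\<in>S. \<Sum>E\<in>S. f C E B)" by (rule sum.cong[OF refl], rule sum.swap)
  also have "\<dots> = (\<Sum>B\<in>S. \<Sum>C\<in>S. \<Sum>E\<in>S. f C E B)" by (rule sum.swap)
  also have "\<dots> = (\<Sum>B\<in>S. \<Sum>E\<in>S. \<Sum>C\<in>S. f C E B)" by (rule sum.cong[OF refl], rule sum.swap)
  finally show ?thesis .
qed

lemma swap4: "(\<Sum>C\<in>S. \<Sum>E\<in>S. \<Sum>A\<in>S. \<Sum>B\<in>S. f C E A B) = (\<Sum>A\<in>S. \<Sum>B\<in>S. \<Sum>E\<in>S. \<Sum>C\<in>S. f C E A B)"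
proof -
  have "(\<Sum>C\<in>S. \<Sum>E\<in>S. \<Sum>A\<in>S. \<Sum>B\<in>S. f C E A B) = (\<Sum>C\<in>S. \<Sum>A\<in>S. \<Sum>E\<in>S. \<Sum>B\<in>S. f C E A B)"
    by (rule sum.cong[OF refl], rule sum.swap)
  also have "\<dots> = (\<Sum>A\<in>S. \<Sum>C\<in>S. \<Sum>E\<in>S. \<Sum>B\<in>S. f C E A B)" by (rule sum.swap)
  also have "\<dots> = (\<Sum>A\<in>S. \<Sum>B\<in>S. \<Sum>E\<in>S. \<Sum>C\<in>S. f C E A B)"
    by (rule sum.cong[OF refl], rule swap3')
  finally show ?thesis .
qed

lemma clmul_assoc: "clmul p q (clmul p q U V) W = clmul p q U (clmul p q V W)"
proof (rule ext)
  fix D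
  let ?P = "Pow {1..p+q}"
  let ?s = "clsign p"
  have fin: "finite ?P" by simp
  have "clmul p q (clmul p q U V) W D = (\<Sum>C\<in>?P. \<Sum>E\<in>?P. \<Sum>A\<in>?P. \<Sum>B\<in>?P.
        if symd A B = C \<and> symd C E = D then ?s C E * ?s A B * U A * V B * W E else 0)"
    unfolding clmul_def by (auto simp: sum_distrib_left sum_distrib_right mult_ac intro!: sum.cong)
  also have "\<dots> = (\<Sum>A\<in>?P. \<Sum>B\<in>?P. \<Sum>E\<in>?P. \<Sum>C\<in>?P.
        if symd A B = C \<and> symd C E = D then ?s C E * ?s A B * U A * V B * W E else 0)"
    by (rule swap4)
  also have "\<dots> = (\<Sum>A\<in>?P. \<Sum>B\<in>?P. \<Sum>E\<in>?P.
        if symd (symd A B) E = D then ?s (symd A B) E * ?s A B * U A * V B * W E else 0)"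
    by (intro sum.cong refl, subst sum_delta_cond) (auto simp: fin)
  finally have L: "clmul p q (clmul p q U V) W D = \<dots>" .
  have "clmul p q U (clmul p q V W) D = (\<Sum>A\<in>?P. \<Sum>F\<in>?P. \<Sum>B\<in>?P. \<Sum>E\<in>?P.
        if symd B E = F \<and> symd A F = D then ?s A F * ?s B E * U A * V B * W E else 0)"
    unfolding clmul_def by (auto simp: sum_distrib_left sum_distrib_right mult_ac intro!: sum.cong)
  also have "\<dots> = (\<Sum>A\<in>?P. \<Sum>B\<in>?P. \<Sum>E\<in>?P. \<Sum>F\<in>?P.
        if symd B E = F \<and> symd A F = D then ?s A F * ?s B E * U A * V B * W E else 0)"
    by (rule sum.cong[OF refl], rule swap3)
  also have "\<dots> = (\<Sum>A\<in>?P. \<Sum>B\<in>?P. \<Sum>E\<in>?P.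
        if symd A (symd B E) = D then ?s A (symd B E) * ?s B E * U A * V B * W E else 0)"
    by (intro sum.cong refl, subst sum_delta_cond) (auto simp: fin)
  also have "\<dots> = (\<Sum>A\<in>?P. \<Sum>B\<in>?P. \<Sum>E\<in>?P.
        if symd (symd A B) E = D then ?s (symd A B) E * ?s A B * U A * V B * W E else 0)"
  proof (intro sum.cong refl)
    fix A B E assume "A \<in> ?P" "B \<in> ?P" "E \<in> ?P"
    then have f: "finite A" "finite B" "finite E" by (auto intro: finite_subset)
    have e: "symd A (symd B E) = symd (symd A B) E" by auto
    show "(if symd A (symd B E) = D then ?s A (symd B E) * ?s B E * U A * V B * W E else 0) =
          (if symd (symd A B) E = D then ?s (symd A B) E * ?s A B * U A * V B * W E else 0)"
      using clsign_cocycle[OF f, of p] unfolding e by (simp add: mult_ac)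
  qed
  finally show "clmul p q (clmul p q U V) W D = clmul p q U (clmul p q V W) D" using L by simp
qed

lemma cl_ops: "cladd U V = U + V" "clsub U V = U - V" by (auto simp: cladd_def clsub_def fun_eq_iff)

lemma sum_fun_apply: "(\<Sum>v\<in>t. f v) A = (\<Sum>v\<in>t. f v A)"
  by (induction t rule: infinite_finite_induct) auto

lemma clmul_add_left: "clmul p q (U + V) W = clmul p q U W + clmul p q V W"
  unfolding clmul_def by (auto simp: fun_eq_iff sum.distrib[symmetric] algebra_simps intro!: sum.cong)
lemma clmul_add_right: "clmul p q W (U + V) = clmul p q W U + clmul p q W V"
  unfolding clmul_def by (auto simp: fun_eq_iff sum.distrib[symmetric] algebra_simps intro!: sum.cong)
lemma clmul_diff_left: "clmul p q (U - V) W = clmul p q U W - clmul p q V W"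
  unfolding clmul_def by (auto simp: fun_eq_iff sum_subtractf[symmetric] algebra_simps intro!: sum.cong)
lemma clmul_diff_right: "clmul p q W (U - V) = clmul p q W U - clmul p q W V"
  unfolding clmul_def by (auto simp: fun_eq_iff sum_subtractf[symmetric] algebra_simps intro!: sum.cong)
lemma clmul_scale_left: "clmul p q (clscale c U) W = clscale c (clmul p q U W)"
  unfolding clmul_def clscale_def by (auto simp: fun_eq_iff sum_distrib_left algebra_simps intro!: sum.cong)
lemma clmul_scale_right: "clmul p q W (clscale c U) = clscale c (clmul p q W U)"
  unfolding clmul_def clscale_def by (auto simp: fun_eq_iff sum_distrib_left algebra_simps intro!: sum.cong)
lemma clmul_zero_left: "clmul p q 0 W = 0"
  using clmul_diff_left[of p q 0 0 W] by simp
lemma clmul_zero_right: "clmul p q W 0 = 0"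
  using clmul_diff_right[of p q W 0 0] by simp
lemma clmul_sum_left: "finite t \<Longrightarrow> clmul p q (\<Sum>v\<in>t. f v) W = (\<Sum>v\<in>t. clmul p q (f v) W)"
proof (induction t rule: finite_induct)
  case empty then show ?case by (simp only: sum.empty clmul_zero_left)
next
  case (insert x F) then show ?case by (simp only: sum.insert[OF insert.hyps] clmul_add_left insert.IH)
qed
lemma clmul_sum_right: "finite t \<Longrightarrow> clmul p q W (\<Sum>v\<in>t. f v) = (\<Sum>v\<in>t. clmul p q W (f v))"
proof (induction t rule: finite_induct)
  case empty then show ?case by (simp only: sum.empty clmul_zero_right)
next
  case (insert x F) then show ?case by (simp only: sum.insert[OF insert.hyps] clmul_add_right insert.IH)
qed

lemma clmul_carrier: "clmul p q U V \<in> cl_carrier p q"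
proof -
  have "\<And>A B D. A \<in> Pow {1..p+q} \<Longrightarrow> B \<in> Pow {1..p+q} \<Longrightarrow> \<not> D \<subseteq> {1..p+q} \<Longrightarrow> symd A B \<noteq> D"
    by auto
  then show ?thesis unfolding cl_carrier_def clmul_def by (auto intro!: sum.neutral)
qed

lemma clmul_cong:
  assumes "\<forall>A\<in>Pow {1..p+q}. U A = U' A" "\<forall>A\<in>Pow {1..p+q}. V A = V' A"
  shows "clmul p q U V = clmul p q U' V'"
  unfolding clmul_def using assms by (auto simp: fun_eq_iff intro!: sum.cong)

lemma clsign_empty: "clsign p {} B = 1" "clsign p A {} = 1"
  by (auto simp: clsign_def)

lemma clone_left: "U \<in> cl_carrier p q \<Longrightarrow> clmul p q clone U = U"
proof (rule ext)
  fix D assume U: "U \<in> cl_carrier p q"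
  let ?P = "Pow {1..p+q}"
  have "clmul p q clone U D = (\<Sum>A\<in>?P. \<Sum>B\<in>?P. if A = {} then (if B = D then U B else 0) else 0)"
    unfolding clmul_def clone_def
    by (intro sum.cong refl) (auto simp: clsign_empty)
  also have "\<dots> = (\<Sum>A\<in>?P. if A = {} then (\<Sum>B\<in>?P. if B = D then U B else 0) else 0)"
    by (intro sum.cong refl) auto
  also have "\<dots> = (\<Sum>B\<in>?P. if B = D then U B else 0)" by (simp add: sum.delta)
  also have "\<dots> = U D" using U by (auto simp: sum.delta cl_carrier_def)
  finally show "clmul p q clone U D = U D" .
qed

lemma clone_right: "U \<in> cl_carrier p q \<Longrightarrow> clmul p q U clone = U"
proof (rule ext)
  fix D assume U: "U \<in> cl_carrier p q"
  let ?P = "Pow {1..p+q}"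
  have "clmul p q U clone D = (\<Sum>A\<in>?P. \<Sum>B\<in>?P. if B = {} then (if A = D then U A else 0) else 0)"
    unfolding clmul_def clone_def
    by (intro sum.cong refl) (auto simp: clsign_empty)
  also have "\<dots> = (\<Sum>A\<in>?P. if A = D then U A else 0)"
    by (intro sum.cong refl) (simp add: sum.delta)
  also have "\<dots> = U D" using U by (auto simp: sum.delta cl_carrier_def)
  finally show "clmul p q U clone D = U D" .
qed

lemma Tr_mul: "Tr (clmul p q U V) = (\<Sum>A\<in>Pow {1..p+q}. clsign p A A * U A * V A)"
proof -
  have e: "\<And>A B. (symd A B = {}) = (A = B)" by auto
  have "Tr (clmul p q U V) = (\<Sum>A\<in>Pow {1..p+q}. \<Sum>B\<in>Pow {1..p+q}. if A = B then clsign p A B * U A * V B else 0)"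
    unfolding Tr_def clmul_def e ..
  also have "\<dots> = (\<Sum>A\<in>Pow {1..p+q}. clsign p A A * U A * V A)"
    by (intro sum.cong refl) (simp add: sum.delta)
  finally show ?thesis .
qed

lemma Tr_comm: "Tr (clmul p q U V) = Tr (clmul p q V U)"
  unfolding Tr_mul by (auto simp: mult_ac intro!: sum.cong)



lemma clscale_simps:
  "clscale c (clscale d U) = clscale (c * d) U"
  "clscale 1 U = U"
  "clscale c (U + V) = clscale c U + clscale c V"
  "clscale c (U - V) = clscale c U - clscale c V"
  "clscale (c + d) U = clscale c U + clscale d U"
  "clscale (c - d) U = clscale c U - clscale d U"
  "clscale c 0 = 0"
  "clscale 0 U = 0"
  "clscale (-c) U = - clscale c U"
  by (auto simp: clscale_def fun_eq_iff algebra_simps)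

lemma Tr_simps: "Tr (clscale c U) = c * Tr U" "Tr (U + V) = Tr U + Tr V" "Tr (U - V) = Tr U - Tr V"
  "Tr 0 = 0" "Tr clone = 1" "Tr (- U) = - Tr U"
  by (auto simp: Tr_def clscale_def clone_def)

lemma Tr_sum: "Tr (\<Sum>v\<in>t. f v) = (\<Sum>v\<in>t. Tr (f v))"
  by (simp add: Tr_def sum_fun_apply)

lemma clone_carrier: "clone \<in> cl_carrier p q" by (auto simp: clone_def cl_carrier_def)
lemma clscale_carrier: "U \<in> cl_carrier p q \<Longrightarrow> clscale c U \<in> cl_carrier p q"
  by (auto simp: clscale_def cl_carrier_def)

definition basis :: "nat set \<Rightarrow> cl" where "basis S = (\<lambda>A. if A = S then 1 else 0)"

lemma clgen_basis: "clgen a = basis {a}" by (simp add: clgen_def basis_def)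

lemma clsign_nz: "clsign p A B \<noteq> 0"
proof -
  have "(\<Prod>c\<in>A \<inter> B. eta p c c) \<noteq> 0"
    by (cases "finite (A \<inter> B)") (auto simp: eta_def)
  then show ?thesis by (simp add: clsign_def)
qed

lemma mul_basis_left:
  assumes "S \<in> Pow {1..p+q}" "B \<in> Pow {1..p+q}"
  shows "clmul p q (basis S) X (symd S B) = clsign p S B * X B"
proof -
  let ?P = "Pow {1..p+q}"
  have e: "\<And>B'. (symd S B' = symd S B) = (B' = B)" by auto
  have "clmul p q (basis S) X (symd S B) = (\<Sum>A\<in>?P. \<Sum>B'\<in>?P. if A = S then (if B' = B then clsign p S B * X B else 0) else 0)"
    unfolding clmul_def basis_def
  proof (intro sum.cong refl)
    fix A B' show "(if symd A B' = symd S B then clsign p A B' * (if A = S then 1 else 0) * X B' else 0) =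
      (if A = S then (if B' = B then clsign p S B * X B else 0) else 0)"
      by (cases "A = S") (simp_all add: e)
  qed
  also have "\<dots> = (\<Sum>A\<in>?P. if A = S then (\<Sum>B'\<in>?P. if B' = B then clsign p S B * X B else 0) else 0)"
    by (intro sum.cong refl) simp
  also have "\<dots> = clsign p S B * X B" using assms by (simp add: sum.delta)
  finally show ?thesis .
qed

lemma mul_basis_right:
  assumes "S \<in> Pow {1..p+q}" "B \<in> Pow {1..p+q}"
  shows "clmul p q X (basis S) (symd S B) = clsign p B S * X B"
proof -
  let ?P = "Pow {1..p+q}"
  have e: "\<And>B'. (symd B' S = symd S B) = (B' = B)" by auto
  have e': "\<And>A. (symd A S = symd S B) = (A = B)" by auto
  have "clmul p q X (basis S) (symd S B) = (\<Sum>A\<in>?P. \<Sum>B'\<in>?P. if B' = S then (if A = B then clsign p B S * X B else 0) else 0)"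
    unfolding clmul_def basis_def
  proof (intro sum.cong refl)
    fix A B' show "(if symd A B' = symd S B then clsign p A B' * X A * (if B' = S then 1 else 0) else 0) =
      (if B' = S then (if A = B then clsign p B S * X B else 0) else 0)"
      by (cases "B' = S") (simp_all add: e')
  qed
  also have "\<dots> = (\<Sum>A\<in>?P. if A = B then clsign p B S * X B else 0)"
    by (intro sum.cong refl) (insert assms, simp add: sum.delta)
  also have "\<dots> = clsign p B S * X B" using assms by (simp add: sum.delta)
  finally show ?thesis .
qed

lemma card_invs_single:
  assumes "finite B"
  shows "card (invs {a} B) + card (invs B {a}) = card (B - {a})"
proof -
  have 1: "invs {a} B = (\<lambda>b. (a,b)) ` {b\<in>B. b < a}" by (auto simp: invs_def)
  have 2: "invs B {a} = (\<lambda>b. (b,a)) ` {b\<in>B. a < b}" by (auto simp: invs_def)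
  have 3: "B - {a} = {b\<in>B. b < a} \<union> {b\<in>B. a < b}" by auto
  have c1: "card ((\<lambda>b. (a,b)) ` {b\<in>B. b < a}) = card {b\<in>B. b < a}"
    by (rule card_image) (simp add: inj_on_def)
  have c2: "card ((\<lambda>b. (b,a)) ` {b\<in>B. a < b}) = card {b\<in>B. a < b}"
    by (rule card_image) (simp add: inj_on_def)
  have c3: "card ({b\<in>B. b < a} \<union> {b\<in>B. a < b}) = card {b\<in>B. b < a} + card {b\<in>B. a < b}"
    by (rule card_Un_disjoint) (use assms in auto)
  show ?thesis unfolding 1 2 c1 c2 by (subst 3) (rule c3[symmetric])
qed

lemma clsign_single_swap:
  assumes "finite B"
  shows "clsign p {a} B = (-1) ^ card (B - {a}) * clsign p B {a}"
proof -
  have "(-1::complex) ^ card (invs {a} B) = (-1) ^ card (B - {a}) * (-1) ^ card (invs B {a})"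
  proof -
    have sq: "\<And>n. (-1::complex)^n * (-1)^n = 1" by (simp add: power_mult_distrib[symmetric])
    have "(-1::complex) ^ card (B - {a}) * (-1) ^ card (invs B {a}) =
      (-1) ^ card (invs {a} B) * ((-1) ^ card (invs B {a}) * (-1) ^ card (invs B {a}))"
      unfolding card_invs_single[OF assms, of a, symmetric] power_add by (simp only: mult.assoc)
    then show ?thesis by (simp only: sq mult_1_right)
  qed
  then show ?thesis unfolding clsign_alt by (simp add: Int_commute mult_ac)
qed

lemma cent_coeff:
  assumes comm: "clmul p q (clgen a) X = clmul p q X (clgen a)" and a: "a \<in> {1..p+q}"
    and B: "B \<in> Pow {1..p+q}" and odd: "odd (card (B - {a}))"
  shows "X B = 0"
proof -
  have S: "{a} \<in> Pow {1..p+q}" using a by auto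
  have eq1: "clsign p {a} B * X B = clsign p B {a} * X B"
    using mul_basis_left[OF S B, of X] mul_basis_right[OF S B, of X] comm by (simp only: clgen_basis)
  have fB: "finite B" using B by (auto intro: finite_subset)
  have m: "(-1::complex) ^ card (B - {a}) = -1" using odd by simp
  have "clsign p {a} B = - clsign p B {a}"
    using clsign_single_swap[OF fB, of p a] m by simp
  then have "2 * (clsign p B {a} * X B) = 0" using eq1 by (simp add: algebra_simps)
  then show ?thesis using clsign_nz[of p B "{a}"] by simp
qed



lemma cent_zero:
  assumes X: "X \<in> cl_S p q" and comm: "\<forall>a\<in>{1..p+q}. clmul p q (clgen a) X = clmul p q X (clgen a)"
  shows "X = 0"
proof (rule ext)
  fix B
  show "X B = 0 B"
  proof (cases "B \<in> Pow {1..p+q}")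
    case False then show ?thesis using X by (auto simp: cl_S_def cl_carrier_def)
  next
    case True
    have fB: "finite B" using True by (auto intro: finite_subset)
    show ?thesis
    proof (cases "B = {}")
      case True then show ?thesis using X by (auto simp: cl_S_def)
    next
      case Bne: False
      show ?thesis
      proof (cases "even (card B)")
        case True
        obtain a where a: "a \<in> B" using Bne by auto
        have "card (B - {a}) = card B - 1" using a fB by simp
        moreover have "card B > 0" using a fB card_gt_0_iff by auto
        ultimately have "odd (card (B - {a}))" using True by auto
        then show ?thesis using cent_coeff[of p q a X B] comm a \<open>B \<in> Pow {1..p+q}\<close> by auto
      next
        case oddB: False
        show ?thesis
        proof (cases "B = {1..p+q}")
          case True
          then have "odd (p+q)" using oddB by simp
          then show ?thesis using X True by (auto simp: cl_S_def)
        next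
          case False
          then obtain a where a: "a \<in> {1..p+q}" "a \<notin> B" using \<open>B \<in> Pow {1..p+q}\<close> by blast
          then have "odd (card (B - {a}))" using oddB by simp
          then show ?thesis using cent_coeff[of p q a X B] comm a \<open>B \<in> Pow {1..p+q}\<close> by auto
        qed
      qed
    qed
  qed
qed

lemma comm_eq: "comm p q U V = clmul p q U V - clmul p q V U" by (simp add: comm_def cl_ops)

lemma clmul_neg_left: "clmul p q (- U) V = - clmul p q U V"
  using clmul_diff_left[of p q 0 U V] by (simp add: clmul_zero_left)
lemma clmul_neg_right: "clmul p q V (- U) = - clmul p q V U"
  using clmul_diff_right[of p q V 0 U] by (simp add: clmul_zero_right)

lemma parity_pow: "even (x + y) \<Longrightarrow> (-1::complex) ^ x = (-1) ^ y"
  by (metis even_add neg_one_even_power neg_one_odd_power)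

lemma card_invs_N:
  assumes "B \<subseteq> N" "finite N"
  shows "card (invs N B) + card (invs B N) = card N * card B - card B"
proof -
  let ?R = "{(a,b). a \<in> N \<and> b \<in> B \<and> a < b}"
  have 1: "invs B N = (\<lambda>(a,b). (b,a)) ` ?R" by (auto simp: invs_def image_iff)
  have c1: "card ((\<lambda>(a,b). (b,a)) ` ?R) = card ?R"
    by (rule card_image) (auto simp: inj_on_def)
  have fB: "finite B" using assms finite_subset by blast
  have 2: "invs N B \<union> ?R = (N \<times> B) - (\<lambda>b. (b,b)) ` B" using assms by (auto simp: invs_def)
  have c2: "card (invs N B \<union> ?R) = card (invs N B) + card ?R"
    by (rule card_Un_disjoint) (auto simp: invs_def intro: finite_subset[of _ "N \<times> B"] assms fB)
  have c3: "card ((N \<times> B) - (\<lambda>b. (b,b)) ` B) = card N * card B - card B"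
  proof -
    have "card ((N \<times> B) - (\<lambda>b. (b,b)) ` B) = card (N \<times> B) - card ((\<lambda>b. (b,b)) ` B)"
      by (rule card_Diff_subset) (use assms fB in auto)
    moreover have "card ((\<lambda>b. (b,b)) ` B) = card B" by (rule card_image) (auto simp: inj_on_def)
    ultimately show ?thesis by (simp add: card_cartesian_product)
  qed
  show ?thesis using c1 c2 c3 unfolding 1 2 by simp
qed

lemma clsign_N_swap:
  assumes "B \<subseteq> {1..p+q}" "odd (p+q)"
  shows "clsign p {1..p+q} B = clsign p B {1..p+q}"
proof -
  have c: "card (invs {1..p+q} B) + card (invs B {1..p+q}) = (p+q) * card B - card B"
    using card_invs_N[OF assms(1)] by simp
  have "even ((p+q) * card B - card B)"
  proof -
    have "(p+q) * card B - card B = (p+q-1) * card B" by (simp add: diff_mult_distrib)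
    moreover have "even (p+q-1)" using assms(2) by (simp add: odd_pos)
    ultimately show ?thesis by simp
  qed
  then have "(-1::complex) ^ card (invs {1..p+q} B) = (-1) ^ card (invs B {1..p+q})"
    using c by (intro parity_pow) simp
  then show ?thesis unfolding clsign_alt by (simp add: Int_commute)
qed

lemma basisN_central:
  assumes "odd (p+q)"
  shows "clmul p q (basis {1..p+q}) X = clmul p q X (basis {1..p+q})"
proof (rule ext)
  fix D
  let ?N = "{1..p+q}"
  show "clmul p q (basis ?N) X D = clmul p q X (basis ?N) D"
  proof (cases "D \<subseteq> ?N")
    case Dsub: True
    let ?B = "symd ?N D"
    have B: "?B \<in> Pow ?N" using Dsub by auto
    have N: "?N \<in> Pow ?N" by auto
    have D: "D = symd ?N ?B" using Dsub by auto
    have "clmul p q (basis ?N) X (symd ?N ?B) = clmul p q X (basis ?N) (symd ?N ?B)"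
      unfolding mul_basis_left[OF N B] mul_basis_right[OF N B]
      using clsign_N_swap[of ?B p q] assms B by simp
    then show ?thesis by (simp only: D[symmetric])
  next
    case False
    then show ?thesis using clmul_carrier[of p q "basis ?N" X] clmul_carrier[of p q X "basis ?N"]
      by (simp add: cl_carrier_def)
  qed
qed

lemma Tr_basis_right:
  assumes "S \<in> Pow {1..p+q}"
  shows "Tr (clmul p q W (basis S)) = clsign p S S * W S"
  unfolding Tr_mul basis_def using assms by (simp add: sum.delta if_distrib cong: if_cong)

lemma commN_zero:
  assumes "odd (p+q)"
  shows "(clmul p q U V - clmul p q V U) {1..p+q} = 0"
proof -
  let ?E = "basis {1..p+q}"
  have N: "{1..p+q} \<in> Pow {1..p+q}" by auto
  have "Tr (clmul p q (clmul p q U V) ?E) = Tr (clmul p q U (clmul p q V ?E))" by (simp add: clmul_assoc)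
  also have "\<dots> = Tr (clmul p q (clmul p q V ?E) U)" by (rule Tr_comm)
  also have "\<dots> = Tr (clmul p q V (clmul p q ?E U))" by (simp add: clmul_assoc)
  also have "\<dots> = Tr (clmul p q V (clmul p q U ?E))" using basisN_central[OF assms] by simp
  also have "\<dots> = Tr (clmul p q (clmul p q V U) ?E)" by (simp add: clmul_assoc)
  finally have "clsign p {1..p+q} {1..p+q} * clmul p q U V {1..p+q} = clsign p {1..p+q} {1..p+q} * clmul p q V U {1..p+q}"
    unfolding Tr_basis_right[OF N] .
  then show ?thesis using clsign_nz by simp
qed



declare upt_Suc[simp del]

interpretation CV: vector_space "clscale :: complex \<Rightarrow> cl \<Rightarrow> cl"
  by unfold_locales (simp_all add: clscale_def fun_eq_iff algebra_simps)

lemma carrier_span_basis: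
  assumes "U \<in> cl_carrier p q"
  shows "U \<in> CV.span (basis ` Pow {1..p+q})"
proof -
  have "U = (\<Sum>A\<in>Pow {1..p+q}. clscale (U A) (basis A))"
  proof (rule ext)
    fix D
    have "(\<Sum>A\<in>Pow {1..p+q}. clscale (U A) (basis A)) D = (\<Sum>A\<in>Pow {1..p+q}. if A = D then U D else 0)"
      unfolding sum_fun_apply by (intro sum.cong refl) (auto simp: clscale_def basis_def)
    also have "\<dots> = U D" using assms by (auto simp: sum.delta' cl_carrier_def)
    finally show "U D = (\<Sum>A\<in>Pow {1..p+q}. clscale (U A) (basis A)) D" by simp
  qed
  also have "\<dots> \<in> CV.span (basis ` Pow {1..p+q})"
    by (intro CV.span_sum CV.span_scale CV.span_base) auto
  finally show ?thesis .
qed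

locale gens =
  fixes p q :: nat and g :: "nat \<Rightarrow> cl"
  assumes g_car: "\<And>a. a \<in> {1..p+q} \<Longrightarrow> g a \<in> cl_carrier p q"
    and g_anti: "\<And>a b. a \<in> {1..p+q} \<Longrightarrow> b \<in> {1..p+q} \<Longrightarrow>
        clmul p q (g a) (g b) + clmul p q (g b) (g a) = clscale (2 * eta p a b) clone"
    and g_tr: "Tr (clprod p q (map g [1..<p+q+1])) = 0"
begin

definition Q :: "nat \<Rightarrow> nat set \<Rightarrow> cl" where
  "Q k A = foldr (\<lambda>a X. clmul p q (g a) X) (filter (\<lambda>a. a \<in> A) [k..<p+q+1]) clone"

lemma g_sq:
  assumes "a \<in> {1..p+q}" shows "clmul p q (g a) (g a) = clscale (eta p a a) clone"
proof (rule ext)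
  fix x
  have "(clmul p q (g a) (g a) + clmul p q (g a) (g a)) x = clscale (2 * eta p a a) clone x"
    using g_anti[OF assms assms] by (rule fun_cong)
  then have "2 * clmul p q (g a) (g a) x = 2 * clscale (eta p a a) clone x"
    by (simp only: plus_fun_apply clscale_def mult_2 distrib_right mult.assoc)
  then show "clmul p q (g a) (g a) x = clscale (eta p a a) clone x" by simp
qed

lemma g_ac:
  assumes "a \<in> {1..p+q}" "b \<in> {1..p+q}" "a \<noteq> b"
  shows "clmul p q (g a) (g b) = - clmul p q (g b) (g a)"
proof -
  have "eta p a b = 0" using assms by (simp add: eta_def)
  then have "clmul p q (g a) (g b) + clmul p q (g b) (g a) = 0"
    using g_anti[OF assms(1,2)] by (simp add: clscale_simps)
  then show ?thesis by (simp add: eq_neg_iff_add_eq_0)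
qed

lemma Q_top: "p+q+1 \<le> k \<Longrightarrow> Q k A = clone" by (simp add: Q_def)

lemma Q_step: "k < p+q+1 \<Longrightarrow> Q k A = (if k \<in> A then clmul p q (g k) (Q (Suc k) A) else Q (Suc k) A)"
  by (simp add: Q_def upt_conv_Cons)

lemma Q_cong:
  assumes "A \<inter> {k..<p+q+1} = B \<inter> {k..<p+q+1}" shows "Q k A = Q k B"
proof -
  have "filter (\<lambda>a. a \<in> A) [k..<p+q+1] = filter (\<lambda>a. a \<in> B) [k..<p+q+1]"
  proof (rule filter_cong[OF refl])
    fix x assume "x \<in> set [k..<p+q+1]"
    then have "x \<in> {k..<p+q+1}" by (simp only: set_upt)
    then show "(x \<in> A) = (x \<in> B)" using assms by blast
  qed
  then show ?thesis unfolding Q_def by simp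
qed

lemma Q_car: "Q k A \<in> cl_carrier p q"
  unfolding Q_def by (cases "filter (\<lambda>a. a \<in> A) [k..<p+q+1]") (auto simp: clmul_carrier clone_carrier)

lemma gen_Q:
  assumes "k \<le> p+q+1" "1 \<le> k"
  shows "\<forall>a A. k \<le> a \<and> a < p+q+1 \<and> 1 \<le> a \<longrightarrow>
    (\<exists>s. (s = 1 \<or> s = -1) \<and> clmul p q (g a) (Q k A) = clscale s (Q k (symd A {a})))"
  using assms(1)
proof (induction k rule: inc_induct)
  case base then show ?case by auto
next
  case (step n)
  show ?case
  proof (intro allI impI)
    fix a A assume a: "n \<le> a \<and> a < p+q+1 \<and> 1 \<le> a"
    have aN: "a \<in> {1..p+q}" using a by auto
    show "\<exists>s. (s = 1 \<or> s = -1) \<and> clmul p q (g a) (Q n A) = clscale s (Q n (symd A {a}))"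
    proof (cases "a = n")
      case True
      show ?thesis
      proof (cases "n \<in> A")
        case nA: True
        have "clmul p q (g a) (Q n A) = clmul p q (clmul p q (g n) (g n)) (Q (Suc n) A)"
          using step.hyps nA True by (simp add: Q_step clmul_assoc)
        also have "\<dots> = clscale (eta p n n) (Q (Suc n) A)"
          using aN True by (simp add: g_sq clmul_scale_left clone_left Q_car)
        also have "Q (Suc n) A = Q n (symd A {a})"
        proof -
          have "Q n (symd A {a}) = Q (Suc n) (symd A {a})" using Q_step[of n "symd A {a}"] step.hyps True nA by simp
          also have "\<dots> = Q (Suc n) A" by (rule Q_cong) (use True in auto)
          finally show ?thesis by simp
        qed
        finally show ?thesis by (intro exI[of _ "eta p n n"]) (auto simp: eta_def)
      next
        case nA: False
        have "clmul p q (g a) (Q n A) = Q n (symd A {a})"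
        proof -
          have 1: "Q n A = Q (Suc n) A" using Q_step[of n A] step.hyps nA by simp
          have 2: "Q n (symd A {a}) = clmul p q (g n) (Q (Suc n) (symd A {a}))" using Q_step[of n "symd A {a}"] step.hyps True nA by simp
          have 3: "Q (Suc n) (symd A {a}) = Q (Suc n) A" by (rule Q_cong) (use True in auto)
          show ?thesis using 1 2 3 True by simp
        qed
        then show ?thesis by (intro exI[of _ 1]) (simp add: clscale_simps)
      qed
    next
      case False
      then have a': "Suc n \<le> a \<and> a < p+q+1 \<and> 1 \<le> a" using a by auto
      obtain s where s: "s = 1 \<or> s = -1" "clmul p q (g a) (Q (Suc n) A) = clscale s (Q (Suc n) (symd A {a}))"
        using step.IH a' by blast
      show ?thesis
      proof (cases "n \<in> A")
        case nA: True
        have nN: "n \<in> {1..p+q}" using step.hyps a nA False assms(2) by auto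
        have "clmul p q (g a) (Q n A) = clmul p q (clmul p q (g a) (g n)) (Q (Suc n) A)"
          using step.hyps nA by (simp add: Q_step clmul_assoc)
        also have "\<dots> = - clmul p q (g n) (clmul p q (g a) (Q (Suc n) A))"
          using g_ac[OF aN nN False] by (simp add: clmul_neg_left clmul_assoc)
        also have "\<dots> = clscale (-s) (clmul p q (g n) (Q (Suc n) (symd A {a})))"
          by (simp add: s clmul_scale_right clscale_simps)
        also have "clmul p q (g n) (Q (Suc n) (symd A {a})) = Q n (symd A {a})"
          using step.hyps nA False by (simp add: Q_step)
        finally show ?thesis using s by (intro exI[of _ "-s"]) auto
      next
        case nA: False
        have "clmul p q (g a) (Q n A) = clscale s (Q (Suc n) (symd A {a}))"
          using step.hyps nA s by (simp add: Q_step)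
        also have "Q (Suc n) (symd A {a}) = Q n (symd A {a})"
          using step.hyps nA False by (simp add: Q_step)
        finally show ?thesis using s by blast
      qed
    qed
  qed
qed

lemma anti_Q:
  assumes "k \<le> p+q+1" "1 \<le> k"
  shows "\<forall>a A. a \<in> {1..p+q} \<longrightarrow>
    clmul p q (g a) (Q k A) = clscale ((-1) ^ card ((A \<inter> {k..<p+q+1}) - {a})) (clmul p q (Q k A) (g a))"
  using assms(1)
proof (induction k rule: inc_induct)
  case base then show ?case by (simp add: Q_top clone_left clone_right g_car clscale_simps)
next
  case (step n)
  show ?case
  proof (intro allI impI)
    fix a A assume aN: "a \<in> {1..p+q}"
    let ?c = "card ((A \<inter> {Suc n..<p+q+1}) - {a})"
    have IH: "clmul p q (g a) (Q (Suc n) A) = clscale ((-1) ^ ?c) (clmul p q (Q (Suc n) A) (g a))"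
      using step.IH aN by blast
    show "clmul p q (g a) (Q n A) = clscale ((-1) ^ card ((A \<inter> {n..<p+q+1}) - {a})) (clmul p q (Q n A) (g a))"
    proof (cases "n \<in> A")
      case nA: False
      have "A \<inter> {n..<p+q+1} = A \<inter> {Suc n..<p+q+1}" using nA by (auto simp: Suc_le_eq le_less)
      then show ?thesis using IH step.hyps nA by (simp add: Q_step)
    next
      case nA: True
      have QQ: "Q n A = clmul p q (g n) (Q (Suc n) A)" using step.hyps nA by (simp add: Q_step)
      show ?thesis
      proof (cases "a = n")
        case True
        have e: "(A \<inter> {n..<p+q+1}) - {a} = (A \<inter> {Suc n..<p+q+1}) - {a}" using True by auto
        have "clmul p q (g a) (clmul p q (g n) (Q (Suc n) A)) = clmul p q (g n) (clmul p q (g a) (Q (Suc n) A))"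
          using True by simp
        also have "\<dots> = clscale ((-1) ^ ?c) (clmul p q (clmul p q (g n) (Q (Suc n) A)) (g a))"
          unfolding IH by (simp add: clmul_scale_right clmul_assoc)
        finally show ?thesis unfolding QQ e .
      next
        case False
        have nN: "n \<in> {1..p+q}" using step.hyps aN nA False assms(2) by auto
        have e: "(A \<inter> {n..<p+q+1}) - {a} = insert n ((A \<inter> {Suc n..<p+q+1}) - {a})" using False nA step.hyps by auto
        have fin: "finite ((A \<inter> {Suc n..<p+q+1}) - {a})" by simp
        have c: "card ((A \<inter> {n..<p+q+1}) - {a}) = Suc ?c" unfolding e using fin by simp
        have "clmul p q (g a) (Q n A) = clmul p q (clmul p q (g a) (g n)) (Q (Suc n) A)"
          unfolding QQ by (simp add: clmul_assoc)
        also have "\<dots> = - clmul p q (g n) (clmul p q (g a) (Q (Suc n) A))"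
          using g_ac[OF aN nN False] by (simp add: clmul_neg_left clmul_assoc)
        also have "\<dots> = clscale (- ((-1) ^ ?c)) (clmul p q (clmul p q (g n) (Q (Suc n) A)) (g a))"
          unfolding IH by (simp add: clmul_scale_right clscale_simps clmul_assoc)
        finally show ?thesis unfolding c QQ by simp
      qed
    qed
  qed
qed

lemma Q_empty: "Q k {} = clone" by (simp add: Q_def)

lemma Tr_Q_odd:
  assumes C: "C \<subseteq> {1..p+q}" and a: "a \<in> {1..p+q}" and odd: "odd (card (C - {a}))"
  shows "Tr (Q 1 C) = 0"
proof -
  let ?X = "Q 1 C"
  have h: "clmul p q (g a) (Q 1 C) = clscale ((-1) ^ card ((C \<inter> {1..<p+q+1}) - {a})) (clmul p q (Q 1 C) (g a))"
    using anti_Q[of 1] a by auto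
  have CC: "(C \<inter> {1..<p+q+1}) - {a} = C - {a}" using C by auto
  have an: "clmul p q (g a) ?X = - clmul p q ?X (g a)"
    using h odd unfolding CC by (simp add: clscale_simps)
  have e: "eta p a a \<noteq> 0" by (simp add: eta_def)
  have "eta p a a * Tr ?X = Tr (clmul p q (clmul p q (g a) (g a)) ?X)"
    using a by (simp add: g_sq clmul_scale_left clone_left Q_car Tr_simps)
  also have "\<dots> = Tr (clmul p q (g a) (clmul p q (g a) ?X))" by (simp add: clmul_assoc)
  also have "\<dots> = Tr (clmul p q (g a) (- clmul p q ?X (g a)))" by (simp only: an)
  also have "\<dots> = - Tr (clmul p q (g a) (clmul p q ?X (g a)))"
    by (simp add: clmul_neg_right Tr_simps)
  also have "\<dots> = - Tr (clmul p q (clmul p q ?X (g a)) (g a))" by (simp add: Tr_comm)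
  also have "\<dots> = - (eta p a a * Tr ?X)"
    using a by (simp add: clmul_assoc g_sq clmul_scale_right clone_right Q_car Tr_simps)
  finally show ?thesis using e by simp
qed

lemma Tr_Q_N: "Tr (Q 1 {1..p+q}) = 0"
proof -
  have "filter (\<lambda>a. a \<in> {1..p+q}) [1..<p+q+1] = [1..<p+q+1]"
    by (rule filter_True) auto
  then have "Q 1 {1..p+q} = clprod p q (map g [1..<p+q+1])"
    by (simp add: Q_def clprod_def foldr_map o_def)
  then show ?thesis using g_tr by simp
qed

lemma Tr_Q:
  assumes C: "C \<subseteq> {1..p+q}" and ne: "C \<noteq> {}"
  shows "Tr (Q 1 C) = 0"
proof -
  have fC: "finite C" using C finite_subset by blast
  show ?thesis
  proof (cases "even (card C)")
    case True
    obtain a where a: "a \<in> C" using ne by auto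
    have "card (C - {a}) = card C - 1" using a fC by simp
    moreover have "card C > 0" using a fC card_gt_0_iff by auto
    ultimately have "odd (card (C - {a}))" using True by auto
    then show ?thesis using Tr_Q_odd[OF C] a C by auto
  next
    case oddC: False
    show ?thesis
    proof (cases "C = {1..p+q}")
      case True then show ?thesis using Tr_Q_N by simp
    next
      case False
      then obtain a where a: "a \<in> {1..p+q}" "a \<notin> C" using C by blast
      then have "odd (card (C - {a}))" using oddC by simp
      then show ?thesis using Tr_Q_odd[OF C a(1)] by auto
    qed
  qed
qed

lemma prod_L:
  assumes "distinct L" "set L \<subseteq> {1..p+q}"
  shows "\<exists>s. (s = 1 \<or> s = -1) \<and> clmul p q (foldr (\<lambda>a X. clmul p q (g a) X) L clone) (Q 1 B) = clscale s (Q 1 (symd B (set L)))"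
  using assms
proof (induction L)
  case Nil then show ?case by (auto simp: clone_left Q_car clscale_simps)
next
  case (Cons a L)
  then obtain s where s: "s = 1 \<or> s = -1" "clmul p q (foldr (\<lambda>a X. clmul p q (g a) X) L clone) (Q 1 B) = clscale s (Q 1 (symd B (set L)))"
    by auto
  have a: "a \<in> {1..p+q}" "a \<notin> set L" using Cons.prems by auto
  have G: "\<forall>a A. 1 \<le> a \<and> a < p+q+1 \<and> 1 \<le> a \<longrightarrow>
    (\<exists>s. (s = 1 \<or> s = -1) \<and> clmul p q (g a) (Q 1 A) = clscale s (Q 1 (symd A {a})))"
    by (rule gen_Q) auto
  have g1: "1 \<le> a \<and> a < p+q+1 \<and> 1 \<le> a" using a by auto
  obtain s' where s': "s' = 1 \<or> s' = -1" "clmul p q (g a) (Q 1 (symd B (set L))) = clscale s' (Q 1 (symd (symd B (set L)) {a}))"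
    using G[rule_format, of a "symd B (set L)", OF g1] by blast
  have e: "symd (symd B (set L)) {a} = symd B (set (a # L))" using a by auto
  have "clmul p q (foldr (\<lambda>a X. clmul p q (g a) X) (a # L) clone) (Q 1 B) = clscale (s * s') (Q 1 (symd B (set (a # L))))"
    using s s' e by (simp add: clmul_assoc clmul_scale_right clscale_simps mult.commute)
  then show ?case using s s' by (intro exI[of _ "s * s'"]) auto
qed

lemma Q_mul:
  assumes "A \<subseteq> {1..p+q}" "B \<subseteq> {1..p+q}"
  shows "\<exists>s. (s = 1 \<or> s = -1) \<and> clmul p q (Q 1 A) (Q 1 B) = clscale s (Q 1 (symd A B))"
proof -
  let ?L = "filter (\<lambda>a. a \<in> A) [1..<p+q+1]"
  have sL: "set ?L = A" using assms by auto
  have "distinct ?L" by simp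
  then obtain s where "s = 1 \<or> s = -1" "clmul p q (foldr (\<lambda>a X. clmul p q (g a) X) ?L clone) (Q 1 B) = clscale s (Q 1 (symd B (set ?L)))"
    using prod_L[of ?L B] assms sL by blast
  moreover have "foldr (\<lambda>a X. clmul p q (g a) X) ?L clone = Q 1 A" by (simp add: Q_def)
  ultimately have "s = 1 \<or> s = -1" "clmul p q (Q 1 A) (Q 1 B) = clscale s (Q 1 (symd B A))"
    unfolding sL by simp_all
  moreover have "symd B A = symd A B" by auto
  ultimately show ?thesis by auto
qed

lemma Tr_QQ:
  assumes "A \<subseteq> {1..p+q}" "B \<subseteq> {1..p+q}"
  shows "Tr (clmul p q (Q 1 A) (Q 1 B)) = 0 \<longleftrightarrow> A \<noteq> B"
proof -
  obtain s where s: "s = 1 \<or> s = -1" "clmul p q (Q 1 A) (Q 1 B) = clscale s (Q 1 (symd A B))"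
    using Q_mul[OF assms] by blast
  show ?thesis
  proof (cases "A = B")
    case True then show ?thesis using s by (auto simp: Tr_simps Q_empty)
  next
    case False
    then have "symd A B \<noteq> {}" by auto
    moreover have "symd A B \<subseteq> {1..p+q}" using assms by auto
    ultimately show ?thesis using s False Tr_Q by (simp add: Tr_simps)
  qed
qed

lemma Q_inj: "inj_on (Q 1) (Pow {1..p+q})"
proof (rule inj_onI)
  fix A B assume A: "A \<in> Pow {1..p+q}" and B: "B \<in> Pow {1..p+q}" and e: "Q 1 A = Q 1 B"
  have "Tr (clmul p q (Q 1 B) (Q 1 B)) \<noteq> 0" using Tr_QQ[of B B] B by auto
  then have "Tr (clmul p q (Q 1 A) (Q 1 B)) \<noteq> 0" using e by simp
  then show "A = B" using Tr_QQ[of A B] A B by auto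
qed

lemma Q_indep: "CV.independent (Q 1 ` Pow {1..p+q})"
  unfolding CV.independent_explicit_finite_subsets
proof (intro allI impI ballI)
  fix T u v assume T: "T \<subseteq> Q 1 ` Pow {1..p+q}" "finite T" and sum0: "(\<Sum>v\<in>T. clscale (u v) v) = 0" and v: "v \<in> T"
  obtain B where B: "B \<in> Pow {1..p+q}" "v = Q 1 B" using T v by auto
  have "0 = Tr (clmul p q (\<Sum>v\<in>T. clscale (u v) v) (Q 1 B))"
    unfolding sum0 by (simp add: clmul_zero_left Tr_simps)
  also have "\<dots> = (\<Sum>w\<in>T. u w * Tr (clmul p q w (Q 1 B)))"
    using T by (simp add: clmul_sum_left Tr_sum clmul_scale_left Tr_simps)
  also have "\<dots> = u v * Tr (clmul p q v (Q 1 B))"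
  proof (rule sum.remove[OF T(2) v, THEN trans])
    have "(\<Sum>w\<in>T - {v}. u w * Tr (clmul p q w (Q 1 B))) = 0"
    proof (rule sum.neutral, rule ballI)
      fix w assume w: "w \<in> T - {v}"
      then obtain A where A: "A \<in> Pow {1..p+q}" "w = Q 1 A" using T by auto
      then have "A \<noteq> B" using w B by auto
      then show "u w * Tr (clmul p q w (Q 1 B)) = 0" using Tr_QQ[of A B] A B by simp
    qed
    then show "u v * Tr (clmul p q v (Q 1 B)) + (\<Sum>w\<in>T - {v}. u w * Tr (clmul p q w (Q 1 B))) = u v * Tr (clmul p q v (Q 1 B))"
      by simp
  qed
  finally have "u v * Tr (clmul p q v (Q 1 B)) = 0" by simp
  moreover have "Tr (clmul p q v (Q 1 B)) \<noteq> 0" using Tr_QQ[of B B] B by auto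
  ultimately show "u v = 0" by simp
qed

lemma Q_span: "cl_carrier p q \<subseteq> CV.span (Q 1 ` Pow {1..p+q})"
proof
  fix U assume U: "U \<in> cl_carrier p q"
  let ?S = "Q 1 ` Pow {1..p+q}"
  let ?T = "basis ` Pow {1..p+q}"
  show "U \<in> CV.span ?S"
  proof (rule ccontr)
    assume nU: "U \<notin> CV.span ?S"
    have ind: "CV.independent (insert U ?S)" by (rule CV.independent_insertI[OF nU Q_indep])
    have sub: "insert U ?S \<subseteq> CV.span ?T"
      unfolding insert_subset image_subset_iff using carrier_span_basis[OF U] carrier_span_basis[OF Q_car] by simp
    have fT: "finite ?T" by simp
    have "card (insert U ?S) \<le> card ?T"
      using CV.independent_span_bound[OF fT ind sub] by (rule conjunct2)
    also have "\<dots> \<le> card (Pow {1..p+q})" by (rule card_image_le) simp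
    finally have le: "card (insert U ?S) \<le> card (Pow {1..p+q})" .
    have "U \<notin> ?S"
    proof
      assume "U \<in> ?S" then have "U \<in> CV.span ?S" by (rule CV.span_base)
      with nU show False by simp
    qed
    then have "card (insert U ?S) = Suc (card ?S)" by simp
    also have "card ?S = card (Pow {1..p+q})" by (rule card_image[OF Q_inj])
    finally show False using le by simp
  qed
qed

lemma comm_all:
  assumes X: "X \<in> cl_carrier p q" and c: "\<And>a. a \<in> {1..p+q} \<Longrightarrow> clmul p q (g a) X = clmul p q X (g a)"
    and Y: "Y \<in> cl_carrier p q"
  shows "clmul p q Y X = clmul p q X Y"
proof -
  have L: "set L \<subseteq> {1..p+q} \<Longrightarrow> clmul p q (foldr (\<lambda>a X. clmul p q (g a) X) L clone) X = clmul p q X (foldr (\<lambda>a X. clmul p q (g a) X) L clone)" for L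
  proof (induction L)
    case Nil then show ?case by (simp add: clone_left clone_right X)
  next
    case (Cons a L)
    let ?F = "foldr (\<lambda>a X. clmul p q (g a) X) L clone"
    have a: "a \<in> {1..p+q}" using Cons.prems by auto
    have IH: "clmul p q ?F X = clmul p q X ?F" using Cons by auto
    have "clmul p q (clmul p q (g a) ?F) X = clmul p q (g a) (clmul p q X ?F)" by (simp add: clmul_assoc IH)
    also have "\<dots> = clmul p q (clmul p q (g a) X) ?F" by (simp add: clmul_assoc)
    also have "\<dots> = clmul p q X (clmul p q (g a) ?F)" by (simp add: c[OF a] clmul_assoc)
    finally show ?case by simp
  qed
  have Q: "clmul p q (Q 1 A) X = clmul p q X (Q 1 A)" for A
    unfolding Q_def by (rule L) auto
  have "Y \<in> CV.span (Q 1 ` Pow {1..p+q})" using Q_span Y by auto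
  then show ?thesis
  proof (induction rule: CV.span_induct)
    case base
    show ?case
    proof (rule CV.subspaceI)
      show "0 \<in> {Y. clmul p q Y X = clmul p q X Y}" by (simp add: clmul_zero_left clmul_zero_right)
      show "x + y \<in> {Y. clmul p q Y X = clmul p q X Y}" if "x \<in> {Y. clmul p q Y X = clmul p q X Y}" "y \<in> {Y. clmul p q Y X = clmul p q X Y}" for x y
        using that by (simp add: clmul_add_left clmul_add_right)
      show "clscale c x \<in> {Y. clmul p q Y X = clmul p q X Y}" if "x \<in> {Y. clmul p q Y X = clmul p q X Y}" for c x
        using that by (simp add: clmul_scale_left clmul_scale_right)
    qed
  next
    case (step x) then show ?case using Q by auto
  qed
qed

end

lemma gens_central_zero:
  assumes "gens p q g" and X: "X \<in> cl_S p q" and c: "\<And>a. a \<in> {1..p+q} \<Longrightarrow> clmul p q (g a) X = clmul p q X (g a)"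
  shows "X = 0"
proof -
  interpret gens p q g by fact
  have Xc: "X \<in> cl_carrier p q" using X by (simp add: cl_S_def)
  show ?thesis
  proof (rule cent_zero[OF X], rule ballI)
    fix a assume aN: "a \<in> {1..p+q}"
    have ga: "clgen a \<in> cl_carrier p q" using aN by (auto simp: clgen_def cl_carrier_def)
    show "clmul p q (clgen a) X = clmul p q X (clgen a)" by (rule comm_all[where Y="clgen a"]) (use Xc c ga in auto)
  qed
qed



lemma mvt_bound:
  fixes f f' :: "real \<Rightarrow> complex"
  assumes ab0: "a \<le> b" and d: "\<And>x. x \<in> {a..b} \<Longrightarrow> (f has_vector_derivative f' x) (at x)"
    and B: "\<And>x. x \<in> {a..b} \<Longrightarrow> norm (f' x) \<le> B"
  shows "norm (f b - f a) \<le> B * (b - a)"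
proof (cases "a = b")
  case True then show ?thesis by simp
next
  case False then have ab: "a < b" using ab0 by simp
  have "norm (f b - f a) \<le> B * b - B * a"
  proof (rule differentiable_bound_general[OF ab, where \<phi>="\<lambda>x. B * x" and \<phi>'="\<lambda>_. B" and f'=f'])
    show "continuous_on {a..b} f"
      by (rule continuous_on_vector_derivative) (use d has_vector_derivative_at_within in blast)
    show "continuous_on {a..b} (\<lambda>x. B * x)" by (intro continuous_intros)
    show "(f has_vector_derivative f' x) (at x)" if "a < x" "x < b" for x using d that by auto
    show "((\<lambda>x. B * x) has_vector_derivative B) (at x)" if "a < x" "x < b" for x
      by (rule has_real_derivative_iff_has_vector_derivative[THEN iffD1]) (auto intro!: derivative_eq_intros)
    show "norm (f' x) \<le> B" if "a < x" "x < b" for x using B that by auto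
  qed
  then show ?thesis by (simp add: algebra_simps)
qed

lemma lin_vd: "((\<lambda>v. complex_of_real v * c) has_vector_derivative c) (at x)"
proof -
  have "((\<lambda>v. complex_of_real v) has_vector_derivative of_real 1) (at x)"
    by (rule has_vector_derivative_of_real) (rule DERIV_ident)
  from has_vector_derivative_mult_left[OF this, of c] show ?thesis by simp
qed

lemma dist_box:
  fixes u v s0 t0 h :: real
  assumes "u \<in> {s0..s0+h}" "v \<in> {t0..t0+h}"
  shows "dist (u,v) (s0,t0) \<le> 2 * h"
proof -
  have "dist (u,v) (s0,t0) = sqrt ((dist u s0)\<^sup>2 + (dist v t0)\<^sup>2)" by (rule dist_Pair_Pair)
  also have "\<dots> \<le> \<bar>dist u s0\<bar> + \<bar>dist v t0\<bar>" by (rule sqrt_sum_squares_le_sum_abs)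
  also have "\<dots> \<le> 2 * h" using assms by (auto simp: dist_real_def)
  finally show ?thesis .
qed

lemma clairaut2:
  fixes F Fs Ft Fst Fts :: "real \<Rightarrow> real \<Rightarrow> complex"
  assumes d1: "\<And>s t. ((\<lambda>u. F u t) has_vector_derivative Fs s t) (at s)"
    and d2: "\<And>s t. ((\<lambda>v. F s v) has_vector_derivative Ft s t) (at t)"
    and d12: "\<And>s t. ((\<lambda>v. Fs s v) has_vector_derivative Fst s t) (at t)"
    and d21: "\<And>s t. ((\<lambda>u. Ft u t) has_vector_derivative Fts s t) (at s)"
    and c12: "continuous (at (s0,t0)) (\<lambda>z. Fst (fst z) (snd z))"
    and c21: "continuous (at (s0,t0)) (\<lambda>z. Fts (fst z) (snd z))"
  shows "Fst s0 t0 = Fts s0 t0"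
proof -
  let ?c12 = "Fst s0 t0"
  let ?c21 = "Fts s0 t0"
  have key: "norm (?c12 - ?c21) \<le> 2 * e" if e: "e > 0" for e
  proof -
    obtain d1 where dd1: "d1 > 0" "\<And>z. dist z (s0,t0) < d1 \<Longrightarrow> dist (Fst (fst z) (snd z)) ?c12 < e"
      using c12 e unfolding continuous_at_eps_delta by fastforce
    obtain d2 where dd2: "d2 > 0" "\<And>z. dist z (s0,t0) < d2 \<Longrightarrow> dist (Fts (fst z) (snd z)) ?c21 < e"
      using c21 e unfolding continuous_at_eps_delta by fastforce
    define h where "h = min d1 d2 / 3"
    have h: "h > 0" using dd1 dd2 by (simp add: h_def)
    have box1: "norm (Fst u v - ?c12) \<le> e" if "u \<in> {s0..s0+h}" "v \<in> {t0..t0+h}" for u v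
    proof -
      have "dist (u,v) (s0,t0) < d1" using dist_box[OF that] h unfolding h_def by linarith
      then show ?thesis using dd1(2)[of "(u,v)"] by (simp add: dist_norm)
    qed
    have box2: "norm (Fts u v - ?c21) \<le> e" if "u \<in> {s0..s0+h}" "v \<in> {t0..t0+h}" for u v
    proof -
      have "dist (u,v) (s0,t0) < d2" using dist_box[OF that] h unfolding h_def by linarith
      then show ?thesis using dd2(2)[of "(u,v)"] by (simp add: dist_norm)
    qed
    let ?D = "F (s0+h) (t0+h) - F (s0+h) t0 - F s0 (t0+h) + F s0 t0"
    have A1: "norm (Fs u (t0+h) - Fs u t0 - of_real h * ?c12) \<le> e * h" if u: "u \<in> {s0..s0+h}" for u
    proof -
      have "norm ((Fs u (t0+h) - of_real (t0+h) * ?c12) - (Fs u t0 - of_real t0 * ?c12)) \<le> e * ((t0+h) - t0)"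
      proof (rule mvt_bound[where f="\<lambda>v. Fs u v - of_real v * ?c12" and f'="\<lambda>v. Fst u v - ?c12"])
        show "t0 \<le> t0 + h" using h by simp
        show "((\<lambda>v. Fs u v - of_real v * ?c12) has_vector_derivative Fst u v - ?c12) (at v)" for v
          by (intro has_vector_derivative_diff d12 lin_vd)
        show "norm (Fst u v - ?c12) \<le> e" if "v \<in> {t0..t0+h}" for v using box1[OF u that] .
      qed
      then show ?thesis by (simp add: algebra_simps)
    qed
    have A: "norm (?D - of_real h * (of_real h * ?c12)) \<le> (e * h) * h"
    proof -
      have "norm ((F (s0+h) (t0+h) - F (s0+h) t0 - of_real (s0+h) * (of_real h * ?c12)) -
                  (F s0 (t0+h) - F s0 t0 - of_real s0 * (of_real h * ?c12))) \<le> (e * h) * ((s0+h) - s0)"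
      proof (rule mvt_bound[where f="\<lambda>u. F u (t0+h) - F u t0 - of_real u * (of_real h * ?c12)"
            and f'="\<lambda>u. Fs u (t0+h) - Fs u t0 - of_real h * ?c12"])
        show "s0 \<le> s0 + h" using h by simp
        show "((\<lambda>u. F u (t0+h) - F u t0 - of_real u * (of_real h * ?c12)) has_vector_derivative
              Fs u (t0+h) - Fs u t0 - of_real h * ?c12) (at u)" for u
          by (intro has_vector_derivative_diff d1 lin_vd)
        show "norm (Fs u (t0+h) - Fs u t0 - of_real h * ?c12) \<le> e * h" if "u \<in> {s0..s0+h}" for u
          using A1[OF that] .
      qed
      then show ?thesis by (simp add: algebra_simps)
    qed
    have B1: "norm (Ft (s0+h) v - Ft s0 v - of_real h * ?c21) \<le> e * h" if v: "v \<in> {t0..t0+h}" for v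
    proof -
      have "norm ((Ft (s0+h) v - of_real (s0+h) * ?c21) - (Ft s0 v - of_real s0 * ?c21)) \<le> e * ((s0+h) - s0)"
      proof (rule mvt_bound[where f="\<lambda>u. Ft u v - of_real u * ?c21" and f'="\<lambda>u. Fts u v - ?c21"])
        show "s0 \<le> s0 + h" using h by simp
        show "((\<lambda>u. Ft u v - of_real u * ?c21) has_vector_derivative Fts u v - ?c21) (at u)" for u
          by (intro has_vector_derivative_diff d21 lin_vd)
        show "norm (Fts u v - ?c21) \<le> e" if "u \<in> {s0..s0+h}" for u using box2[OF that v] .
      qed
      then show ?thesis by (simp add: algebra_simps)
    qed
    have B: "norm (?D - of_real h * (of_real h * ?c21)) \<le> (e * h) * h"
    proof -
      have "norm ((F (s0+h) (t0+h) - F s0 (t0+h) - of_real (t0+h) * (of_real h * ?c21)) -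
                  (F (s0+h) t0 - F s0 t0 - of_real t0 * (of_real h * ?c21))) \<le> (e * h) * ((t0+h) - t0)"
      proof (rule mvt_bound[where f="\<lambda>v. F (s0+h) v - F s0 v - of_real v * (of_real h * ?c21)"
            and f'="\<lambda>v. Ft (s0+h) v - Ft s0 v - of_real h * ?c21"])
        show "t0 \<le> t0 + h" using h by simp
        show "((\<lambda>v. F (s0+h) v - F s0 v - of_real v * (of_real h * ?c21)) has_vector_derivative
              Ft (s0+h) v - Ft s0 v - of_real h * ?c21) (at v)" for v
          by (intro has_vector_derivative_diff d2 lin_vd)
        show "norm (Ft (s0+h) v - Ft s0 v - of_real h * ?c21) \<le> e * h" if "v \<in> {t0..t0+h}" for v
          using B1[OF that] .
      qed
      then show ?thesis by (simp add: algebra_simps)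
    qed
    have "norm (of_real (h * h) * (?c12 - ?c21)) \<le> norm (?D - of_real h * (of_real h * ?c21)) + norm (?D - of_real h * (of_real h * ?c12))"
    proof -
      have "of_real (h * h) * (?c12 - ?c21) = (?D - of_real h * (of_real h * ?c21)) - (?D - of_real h * (of_real h * ?c12))"
        by (simp add: algebra_simps)
      then show ?thesis by (metis norm_triangle_ineq4)
    qed
    also have "\<dots> \<le> 2 * e * (h * h)" using A B by simp
    finally have "(h * h) * norm (?c12 - ?c21) \<le> (h * h) * (2 * e)"
      using h by (simp add: norm_mult abs_mult mult_ac)
    then show ?thesis using h by (simp add: mult_le_cancel_left)
  qed
  show ?thesis
  proof (rule ccontr)
    assume "?c12 \<noteq> ?c21"
    then have pos: "norm (?c12 - ?c21) > 0" by simp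
    have "norm (?c12 - ?c21) \<le> 2 * (norm (?c12 - ?c21) / 4)" by (rule key) (use pos in simp)
    then show False using pos by simp
  qed
qed


lemma Rpq_upd: "x \<in> Rpq p q \<Longrightarrow> mu \<in> {1..p+q} \<Longrightarrow> x(mu := t) \<in> Rpq p q"
  by (auto simp: Rpq_def)

lemma pd_vd: "has_pd mu f y \<Longrightarrow> ((\<lambda>u. f (y(mu := u))) has_vector_derivative pd mu f y) (at (y mu))"
  by (simp add: has_pd_def pd_def vector_derivative_works[symmetric])

lemma cont_P: "continuous_on UNIV (\<lambda>z::real\<times>real. x(mu := fst z, nu := snd z))"
proof (rule continuous_on_coordinatewise_then_product)
  fix i
  show "continuous_on UNIV (\<lambda>z::real\<times>real. (x(mu := fst z, nu := snd z)) i)"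
    by (cases "i = nu"; cases "i = mu") (auto intro!: continuous_intros)
qed

lemma clairaut:
  assumes C2: "C2_scalar p q f" and x: "x \<in> Rpq p q" and mu: "mu \<in> {1..p+q}" and nu: "nu \<in> {1..p+q}"
  shows "pd nu (pd mu f) x = pd mu (pd nu f) x"
proof (cases "mu = nu")
  case True then show ?thesis by simp
next
  case False
  define P where "P = (\<lambda>s t. x(mu := s, nu := t))"
  have PR: "P s t \<in> Rpq p q" for s t unfolding P_def using x mu nu by (intro Rpq_upd) auto
  have P1: "(P s t)(mu := u) = P u t" for s t u unfolding P_def using False by (simp add: fun_upd_twist)
  have P2: "(P s t)(nu := v) = P s v" for s t v unfolding P_def by simp
  have Pm: "P s t mu = s" for s t unfolding P_def using False by simp
  have Pn: "P s t nu = t" for s t unfolding P_def by simp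
  have Px: "P (x mu) (x nu) = x" unfolding P_def by simp
  have hp: "has_pd m f y" "has_pd n (pd m f) y" if "y \<in> Rpq p q" "m \<in> {1..p+q}" "n \<in> {1..p+q}" for y m n
    using C2 that unfolding C2_scalar_def by auto
  have cc: "continuous_on (Rpq p q) (pd n (pd m f))" if "m \<in> {1..p+q}" "n \<in> {1..p+q}" for m n
    using C2 that unfolding C2_scalar_def by auto
  have ct: "continuous (at (s0, t0)) (\<lambda>z. pd n (pd m f) (P (fst z) (snd z)))" if "m \<in> {1..p+q}" "n \<in> {1..p+q}" for m n s0 t0
  proof -
    have cP: "continuous_on UNIV (\<lambda>z. P (fst z) (snd z))" unfolding P_def by (rule cont_P)
    have "continuous_on UNIV (\<lambda>z. pd n (pd m f) (P (fst z) (snd z)))"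
      by (rule continuous_on_compose2[OF cc[OF that] cP]) (use PR in auto)
    then show ?thesis using continuous_on_eq_continuous_at[of UNIV] by auto
  qed
  have "pd nu (pd mu f) (P (x mu) (x nu)) = pd mu (pd nu f) (P (x mu) (x nu))"
  proof (rule clairaut2[where F="\<lambda>s t. f (P s t)" and Fs="\<lambda>s t. pd mu f (P s t)" and Ft="\<lambda>s t. pd nu f (P s t)"
        and Fst="\<lambda>s t. pd nu (pd mu f) (P s t)" and Fts="\<lambda>s t. pd mu (pd nu f) (P s t)"])
    show "((\<lambda>u. f (P u t)) has_vector_derivative pd mu f (P s t)) (at s)" for s t
      using pd_vd[OF hp(1)[OF PR mu nu]] unfolding P1 Pm .
    show "((\<lambda>v. f (P s v)) has_vector_derivative pd nu f (P s t)) (at t)" for s t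
      using pd_vd[OF hp(1)[OF PR nu mu]] unfolding P2 Pn .
    show "((\<lambda>v. pd mu f (P s v)) has_vector_derivative pd nu (pd mu f) (P s t)) (at t)" for s t
      using pd_vd[OF hp(2)[OF PR mu nu]] unfolding P2 Pn .
    show "((\<lambda>u. pd nu f (P u t)) has_vector_derivative pd mu (pd nu f) (P s t)) (at s)" for s t
      using pd_vd[OF hp(2)[OF PR nu mu]] unfolding P1 Pm .
    show "continuous (at (x mu, x nu)) (\<lambda>z. pd nu (pd mu f) (P (fst z) (snd z)))" by (rule ct[OF mu nu])
    show "continuous (at (x mu, x nu)) (\<lambda>z. pd mu (pd nu f) (P (fst z) (snd z)))" by (rule ct[OF nu mu])
  qed
  then show ?thesis unfolding Px .
qed



definition hp :: "nat \<Rightarrow> (point \<Rightarrow> cl) \<Rightarrow> point \<Rightarrow> bool" where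
  "hp mu F x = (\<forall>A. has_pd mu (\<lambda>y. F y A) x)"

lemma has_pd_add: "has_pd mu f x \<Longrightarrow> has_pd mu g x \<Longrightarrow> has_pd mu (\<lambda>y. f y + g y) x"
  unfolding has_pd_def by (rule differentiable_add)
lemma has_pd_diff: "has_pd mu f x \<Longrightarrow> has_pd mu g x \<Longrightarrow> has_pd mu (\<lambda>y. f y - g y) x"
  unfolding has_pd_def by (rule differentiable_diff)
lemma has_pd_mult: "has_pd mu f x \<Longrightarrow> has_pd mu g x \<Longrightarrow> has_pd mu (\<lambda>y. f y * g y) x"
  unfolding has_pd_def by (rule differentiable_mult)
lemma has_pd_const: "has_pd mu (\<lambda>y. c) x"
  unfolding has_pd_def by simp
lemma has_pd_cmult: "has_pd mu f x \<Longrightarrow> has_pd mu (\<lambda>y. c * f y) x"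
  using has_pd_mult[OF has_pd_const] by blast
lemma has_pd_sum: "finite I \<Longrightarrow> (\<And>i. i \<in> I \<Longrightarrow> has_pd mu (f i) x) \<Longrightarrow> has_pd mu (\<lambda>y. \<Sum>i\<in>I. f i y) x"
proof (induction I rule: finite_induct)
  case empty then show ?case by (simp add: has_pd_const)
next
  case (insert i I)
  then have "has_pd mu (\<lambda>y. f i y + (\<Sum>i\<in>I. f i y)) x" by (intro has_pd_add) auto
  then show ?case using insert.hyps by simp
qed

lemma pd_add: "has_pd mu f x \<Longrightarrow> has_pd mu g x \<Longrightarrow> pd mu (\<lambda>y. f y + g y) x = pd mu f x + pd mu g x"
  unfolding has_pd_def pd_def by (rule vector_derivative_add_at)
lemma pd_diff: "has_pd mu f x \<Longrightarrow> has_pd mu g x \<Longrightarrow> pd mu (\<lambda>y. f y - g y) x = pd mu f x - pd mu g x"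
  unfolding has_pd_def pd_def by (rule vector_derivative_diff_at)
lemma pd_mult: "has_pd mu f x \<Longrightarrow> has_pd mu g x \<Longrightarrow> pd mu (\<lambda>y. f y * g y) x = pd mu f x * g x + f x * pd mu g x"
  unfolding has_pd_def pd_def by (simp add: vector_derivative_mult_at)
lemma pd_const: "pd mu (\<lambda>y. c) x = 0"
  unfolding pd_def by simp
lemma pd_cmult: "has_pd mu f x \<Longrightarrow> pd mu (\<lambda>y. c * f y) x = c * pd mu f x"
  using pd_mult[OF has_pd_const, of mu f x c] by (simp add: pd_const)
lemma pd_sum: "finite I \<Longrightarrow> (\<And>i. i \<in> I \<Longrightarrow> has_pd mu (f i) x) \<Longrightarrow> pd mu (\<lambda>y. \<Sum>i\<in>I. f i y) x = (\<Sum>i\<in>I. pd mu (f i) x)"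
proof (induction I rule: finite_induct)
  case empty then show ?case by (simp add: pd_const)
next
  case (insert i I)
  have "pd mu (\<lambda>y. \<Sum>i\<in>insert i I. f i y) x = pd mu (\<lambda>y. f i y + (\<Sum>i\<in>I. f i y)) x"
    using insert.hyps by simp
  also have "\<dots> = pd mu (f i) x + pd mu (\<lambda>y. \<Sum>i\<in>I. f i y) x"
    by (rule pd_add) (use insert in \<open>auto intro: has_pd_sum\<close>)
  finally show ?case using insert by simp
qed

lemma pd_line_cong:
  assumes "\<And>t. f (x(mu := t)) = g (x(mu := t))" shows "pd mu f x = pd mu g x"
proof -
  have "(\<lambda>t. f (x(mu := t))) = (\<lambda>t. g (x(mu := t)))" using assms by (rule ext)
  then show ?thesis unfolding pd_def by simp
qed
lemma has_pd_line_cong: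
  assumes "\<And>t. f (x(mu := t)) = g (x(mu := t))" shows "has_pd mu f x = has_pd mu g x"
proof -
  have "(\<lambda>t. f (x(mu := t))) = (\<lambda>t. g (x(mu := t)))" using assms by (rule ext)
  then show ?thesis unfolding has_pd_def by simp
qed

lemma Rpq_upd': "x \<in> Rpq p q \<Longrightarrow> mu \<in> {1..p+q} \<Longrightarrow> x(mu := t) \<in> Rpq p q"
  by (auto simp: Rpq_def)

lemma pd_zero_on:
  assumes "x \<in> Rpq p q" "mu \<in> {1..p+q}" "\<And>y. y \<in> Rpq p q \<Longrightarrow> f y = 0"
  shows "pd mu f x = 0" "has_pd mu f x"
proof -
  have e: "\<And>t. f (x(mu := t)) = (\<lambda>y. 0) (x(mu := t))" using assms(3)[OF Rpq_upd'[OF assms(1,2)]] by simp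
  show "pd mu f x = 0" using pd_line_cong[of f x mu "\<lambda>y. 0", OF e] by (simp add: pd_const)
  show "has_pd mu f x" using has_pd_line_cong[of f x mu "\<lambda>y. 0", OF e] by (simp add: has_pd_const)
qed

lemma hp_add: "hp mu F x \<Longrightarrow> hp mu G x \<Longrightarrow> hp mu (\<lambda>y. F y + G y) x"
  unfolding hp_def by (auto intro: has_pd_add)
lemma hp_diff: "hp mu F x \<Longrightarrow> hp mu G x \<Longrightarrow> hp mu (\<lambda>y. F y - G y) x"
  unfolding hp_def by (auto intro: has_pd_diff)
lemma hp_scale: "hp mu F x \<Longrightarrow> hp mu (\<lambda>y. clscale c (F y)) x"
  unfolding hp_def clscale_def by (auto intro: has_pd_cmult)

lemma cpd_add: "hp mu F x \<Longrightarrow> hp mu G x \<Longrightarrow> cpd mu (\<lambda>y. F y + G y) x = cpd mu F x + cpd mu G x"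
  unfolding hp_def cpd_def by (auto simp: fun_eq_iff pd_add)
lemma cpd_diff: "hp mu F x \<Longrightarrow> hp mu G x \<Longrightarrow> cpd mu (\<lambda>y. F y - G y) x = cpd mu F x - cpd mu G x"
  unfolding hp_def cpd_def by (auto simp: fun_eq_iff pd_diff)
lemma cpd_scale: "hp mu F x \<Longrightarrow> cpd mu (\<lambda>y. clscale c (F y)) x = clscale c (cpd mu F x)"
  unfolding hp_def cpd_def clscale_def by (auto simp: fun_eq_iff pd_cmult)

lemma clmul_alt: "clmul p q U V = (\<lambda>D. \<Sum>A\<in>Pow {1..p+q}. \<Sum>B\<in>Pow {1..p+q}.
      (if symd A B = D then clsign p A B else 0) * (U A * V B))"
  unfolding clmul_def by (auto simp: fun_eq_iff intro!: sum.cong)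

lemma hp_mul: "hp mu F x \<Longrightarrow> hp mu G x \<Longrightarrow> hp mu (\<lambda>y. clmul p q (F y) (G y)) x"
  unfolding hp_def clmul_alt by (auto intro!: has_pd_sum has_pd_cmult has_pd_mult)

lemma cpd_mul:
  assumes F: "hp mu F x" and G: "hp mu G x"
  shows "cpd mu (\<lambda>y. clmul p q (F y) (G y)) x = clmul p q (cpd mu F x) (G x) + clmul p q (F x) (cpd mu G x)"
proof (rule ext)
  fix D
  let ?P = "Pow {1..p+q}"
  let ?c = "\<lambda>A B. if symd A B = D then clsign p A B else 0"
  have hF: "\<And>A. has_pd mu (\<lambda>y. F y A) x" and hG: "\<And>B. has_pd mu (\<lambda>y. G y B) x"
    using F G by (auto simp: hp_def)
  have "cpd mu (\<lambda>y. clmul p q (F y) (G y)) x D = pd mu (\<lambda>y. \<Sum>A\<in>?P. \<Sum>B\<in>?P. ?c A B * (F y A * G y B)) x"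
    unfolding cpd_def clmul_alt ..
  also have "\<dots> = (\<Sum>A\<in>?P. \<Sum>B\<in>?P. ?c A B * (pd mu (\<lambda>y. F y A) x * G x B + F x A * pd mu (\<lambda>y. G y B) x))"
    by (simp add: pd_sum has_pd_sum has_pd_cmult has_pd_mult hF hG pd_cmult pd_mult)
  also have "\<dots> = (clmul p q (cpd mu F x) (G x) + clmul p q (F x) (cpd mu G x)) D"
    unfolding clmul_alt cpd_def by (simp add: sum.distrib[symmetric] algebra_simps)
  finally show "cpd mu (\<lambda>y. clmul p q (F y) (G y)) x D = (clmul p q (cpd mu F x) (G x) + clmul p q (F x) (cpd mu G x)) D" .
qed

lemma hp_comm: "hp mu F x \<Longrightarrow> hp mu G x \<Longrightarrow> hp mu (\<lambda>y. comm p q (F y) (G y)) x"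
  unfolding comm_eq by (intro hp_diff hp_mul)

lemma cpd_comm:
  assumes F: "hp mu F x" and G: "hp mu G x"
  shows "cpd mu (\<lambda>y. comm p q (F y) (G y)) x = comm p q (cpd mu F x) (G x) + comm p q (F x) (cpd mu G x)"
  unfolding comm_eq
  by (simp add: cpd_diff hp_mul F G cpd_mul algebra_simps)

lemma cpd_line_cong:
  assumes "\<And>t. F (x(mu := t)) = G (x(mu := t))" shows "cpd mu F x = cpd mu G x"
proof -
  have "\<And>A. pd mu (\<lambda>y. F y A) x = pd mu (\<lambda>y. G y A) x"
    by (rule pd_line_cong) (simp add: assms)
  then show ?thesis unfolding cpd_def by simp
qed
lemma hp_line_cong:
  assumes "\<And>t. F (x(mu := t)) = G (x(mu := t))" shows "hp mu F x = hp mu G x"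
proof -
  have "\<And>A. has_pd mu (\<lambda>y. F y A) x = has_pd mu (\<lambda>y. G y A) x"
    by (rule has_pd_line_cong) (simp add: assms)
  then show ?thesis unfolding hp_def by simp
qed



lemma clscale_K: "clscale c U = (\<lambda>_. c) * U" by (simp add: clscale_def fun_eq_iff)
lemma clmul_K_left: "clmul p q ((\<lambda>_. c) * U) V = (\<lambda>_. c) * clmul p q U V"
  using clmul_scale_left[of p q c U V] by (simp add: clscale_K)
lemma clmul_K_right: "clmul p q V ((\<lambda>_. c) * U) = (\<lambda>_. c) * clmul p q V U"
  using clmul_scale_right[of p q V c U] by (simp add: clscale_K)
lemma K_mult: "(\<lambda>_::nat set. a * b) = (\<lambda>_. a) * (\<lambda>_. (b::complex))" by (simp add: fun_eq_iff)
lemma K_neg: "(\<lambda>_::nat set. - a) = - (\<lambda>_. (a::complex))" by (simp add: fun_eq_iff)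

lemmas alg1 = comm_eq clmul_add_left clmul_add_right clmul_diff_left clmul_diff_right
  clmul_neg_left clmul_neg_right clmul_scale_left clmul_scale_right clmul_assoc clscale_simps
lemmas alg2 = clscale_K K_mult K_neg

lemma jacobi: "comm p q a (comm p q b x) - comm p q b (comm p q a x) = comm p q (comm p q a b) x"
  by (simp add: alg1; (simp add: alg2 algebra_simps)?)

lemma jacobi2: "comm p q (comm p q c a) b + comm p q a (comm p q c b) = comm p q c (comm p q a b)"
  by (simp add: alg1; (simp add: alg2 algebra_simps)?)

lemma test_S2:
  assumes FC: "dmCn - dnCm - comm p q Cm Cn = 0"
  shows "(clscale sg (clscale eb (comm p q Cm hn)) + dmCn) - (clscale sg (clscale ea (comm p q Cn hm)) + dnCm)
     - comm p q (clscale sg (clscale ea hm) + Cm) (clscale sg (clscale eb hn) + Cn)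
     = clscale (-(sg * sg * ea * eb)) (comm p q hm hn)"
proof -
  have d: "dmCn = dnCm + comm p q Cm Cn" using FC by (simp add: algebra_simps)
  show ?thesis unfolding d by (simp add: alg1; (simp add: alg2 algebra_simps)?)
qed


lemma alg_S3:
  "clscale (-(sg * sg)) (comm p q c w) - comm p q (clscale sg (clscale e a) + c) (clscale (-(sg * sg)) w)
   = clscale (sg * sg * sg * e) (comm p q a w)"
  by (simp add: alg1; (simp add: alg2 algebra_simps)?)

lemma comm_scale_right: "comm p q U (clscale c V) = clscale c (comm p q U V)"
  by (simp add: comm_eq clmul_scale_right clmul_scale_left clscale_simps)

lemma eta_nz: "eta p m m \<noteq> 0" by (simp add: eta_def)

locale ym =
  fixes p q :: nat and h C B :: "nat \<Rightarrow> point \<Rightarrow> cl" and \<sigma> :: complex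
  assumes cfv: "clifford_field_vector p q h"
    and h_S: "\<forall>x\<in>Rpq p q. \<forall>mu\<in>{1..p+q}. h mu x \<in> cl_S p q"
    and C_S: "\<forall>x\<in>Rpq p q. \<forall>mu\<in>{1..p+q}. C mu x \<in> cl_S p q"
    and h_C2: "\<forall>mu\<in>{1..p+q}. C2_cl p q (h mu)"
    and C_C2: "\<forall>mu\<in>{1..p+q}. C2_cl p q (C mu)"
    and eq: "\<forall>x\<in>Rpq p q. \<forall>mu\<in>{1..p+q}. \<forall>rho\<in>{1..p+q}.
               clsub (cpd mu (\<lambda>y. clscale (eta p rho rho) (h rho y)) x)
                     (comm p q (C mu x) (clscale (eta p rho rho) (h rho x))) = (\<lambda>A. 0)"
    and B_eq: "\<And>mu y. B mu y = clscale \<sigma> (clscale (eta p mu mu) (h mu y)) + C mu y"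
begin

lemma C2h: "mu \<in> {1..p+q} \<Longrightarrow> C2_scalar p q (\<lambda>x. h mu x A)"
  using h_C2 by (auto simp: C2_cl_def)
lemma C2C: "mu \<in> {1..p+q} \<Longrightarrow> C2_scalar p q (\<lambda>x. C mu x A)"
  using C_C2 by (auto simp: C2_cl_def)

lemma hpH: "y \<in> Rpq p q \<Longrightarrow> mu \<in> {1..p+q} \<Longrightarrow> rho \<in> {1..p+q} \<Longrightarrow> hp mu (h rho) y"
  unfolding hp_def using C2h[of rho] by (auto simp: C2_scalar_def)
lemma hpC: "y \<in> Rpq p q \<Longrightarrow> mu \<in> {1..p+q} \<Longrightarrow> rho \<in> {1..p+q} \<Longrightarrow> hp mu (C rho) y"
  unfolding hp_def using C2C[of rho] by (auto simp: C2_scalar_def)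

lemma hcar: "y \<in> Rpq p q \<Longrightarrow> rho \<in> {1..p+q} \<Longrightarrow> h rho y \<in> cl_carrier p q"
  using h_S by (auto simp: cl_S_def)

lemma E:
  assumes y: "y \<in> Rpq p q" and mu: "mu \<in> {1..p+q}" and rho: "rho \<in> {1..p+q}"
  shows "cpd mu (h rho) y = comm p q (C mu y) (h rho y)"
proof -
  let ?e = "eta p rho rho"
  have "clsub (cpd mu (\<lambda>y. clscale ?e (h rho y)) y) (comm p q (C mu y) (clscale ?e (h rho y))) = 0"
    using eq y mu rho by (simp add: zero_fun_def)
  then have "clscale ?e (cpd mu (h rho) y - comm p q (C mu y) (h rho y)) = 0"
    by (simp add: cl_ops cpd_scale[OF hpH[OF y mu rho]] comm_scale_right clscale_simps)
  then have "clscale ?e (clscale ?e (cpd mu (h rho) y - comm p q (C mu y) (h rho y))) = 0"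
    by (simp add: clscale_simps)
  then have "cpd mu (h rho) y - comm p q (C mu y) (h rho y) = 0"
    by (simp only: clscale_simps eta_sq)
  then show ?thesis by simp
qed

lemma gensy: "y \<in> Rpq p q \<Longrightarrow> gens p q (\<lambda>rho. h rho y)"
  using cfv unfolding clifford_field_vector_def by unfold_locales (auto simp: cl_ops)

lemma sym2:
  assumes y: "y \<in> Rpq p q" and mu: "mu \<in> {1..p+q}" and nu: "nu \<in> {1..p+q}" and rho: "rho \<in> {1..p+q}"
  shows "cpd nu (cpd mu (h rho)) y = cpd mu (cpd nu (h rho)) y"
proof (rule ext)
  fix A
  show "cpd nu (cpd mu (h rho)) y A = cpd mu (cpd nu (h rho)) y A"
    unfolding cpd_def using clairaut[OF C2h[OF rho] y mu nu] by simp
qed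

lemma dd:
  assumes y: "y \<in> Rpq p q" and mu: "mu \<in> {1..p+q}" and nu: "nu \<in> {1..p+q}" and rho: "rho \<in> {1..p+q}"
  shows "cpd nu (cpd mu (h rho)) y = comm p q (cpd nu (C mu) y) (h rho y) + comm p q (C mu y) (comm p q (C nu y) (h rho y))"
proof -
  have "cpd nu (cpd mu (h rho)) y = cpd nu (\<lambda>y'. comm p q (C mu y') (h rho y')) y"
    by (rule cpd_line_cong) (rule E[OF Rpq_upd'[OF y nu] mu rho])
  also have "\<dots> = comm p q (cpd nu (C mu) y) (h rho y) + comm p q (C mu y) (cpd nu (h rho) y)"
    by (rule cpd_comm[OF hpC[OF y nu mu] hpH[OF y nu rho]])
  finally show ?thesis unfolding E[OF y nu rho] .
qed

lemma czero:
  assumes y: "y \<in> Rpq p q" and mu: "mu \<in> {1..p+q}" and nu: "nu \<in> {1..p+q}"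
    and z: "\<And>y'. y' \<in> Rpq p q \<Longrightarrow> C nu y' A = 0"
  shows "cpd mu (C nu) y A = 0"
  unfolding cpd_def using pd_zero_on(1)[OF y mu, of "\<lambda>y'. C nu y' A"] z by simp

lemma FC:
  assumes y: "y \<in> Rpq p q" and mu: "mu \<in> {1..p+q}" and nu: "nu \<in> {1..p+q}"
  shows "cpd mu (C nu) y - cpd nu (C mu) y - comm p q (C mu y) (C nu y) = 0"
proof -
  let ?X = "cpd mu (C nu) y - cpd nu (C mu) y - comm p q (C mu y) (C nu y)"
  have c0: "comm p q ?X (h rho y) = 0" if rho: "rho \<in> {1..p+q}" for rho
  proof -
    let ?h = "h rho y"
    have e1: "comm p q (cpd nu (C mu) y) ?h + comm p q (C mu y) (comm p q (C nu y) ?h) =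
              comm p q (cpd mu (C nu) y) ?h + comm p q (C nu y) (comm p q (C mu y) ?h)"
      using dd[OF y mu nu rho] dd[OF y nu mu rho] sym2[OF y mu nu rho] by simp
    have j: "comm p q (comm p q (C mu y) (C nu y)) ?h = comm p q (C mu y) (comm p q (C nu y) ?h) - comm p q (C nu y) (comm p q (C mu y) ?h)"
      by (rule jacobi[symmetric])
    have "comm p q ?X ?h = comm p q (cpd mu (C nu) y) ?h - comm p q (cpd nu (C mu) y) ?h - comm p q (comm p q (C mu y) (C nu y)) ?h"
      by (simp add: alg1; (simp add: alg2 algebra_simps)?)
    also have "\<dots> = 0" unfolding j using e1 by (simp add: algebra_simps)
    finally show ?thesis .
  qed
  have CS: "\<And>y' m. y' \<in> Rpq p q \<Longrightarrow> m \<in> {1..p+q} \<Longrightarrow> C m y' \<in> cl_S p q" using C_S by auto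
  have XS: "?X \<in> cl_S p q"
  proof -
    have car: "?X A = 0" if A: "\<not> A \<subseteq> {1..p+q}" for A
    proof -
      have "cpd mu (C nu) y A = 0" by (rule czero[OF y mu nu]) (use CS[of _ nu] nu A in \<open>auto simp: cl_S_def cl_carrier_def\<close>)
      moreover have "cpd nu (C mu) y A = 0" by (rule czero[OF y nu mu]) (use CS[of _ mu] mu A in \<open>auto simp: cl_S_def cl_carrier_def\<close>)
      moreover have "comm p q (C mu y) (C nu y) A = 0" using clmul_carrier A by (simp add: comm_eq cl_carrier_def)
      ultimately show ?thesis by simp
    qed
    have e: "?X {} = 0"
    proof -
      have "cpd mu (C nu) y {} = 0" by (rule czero[OF y mu nu]) (use CS[of _ nu] nu in \<open>auto simp: cl_S_def\<close>)
      moreover have "cpd nu (C mu) y {} = 0" by (rule czero[OF y nu mu]) (use CS[of _ mu] mu in \<open>auto simp: cl_S_def\<close>)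
      moreover have "comm p q (C mu y) (C nu y) {} = 0"
        using Tr_comm[of p q "C mu y" "C nu y"] by (simp add: comm_eq Tr_def)
      ultimately show ?thesis by simp
    qed
    have o: "?X {1..p+q} = 0" if odd: "odd (p+q)"
    proof -
      have "cpd mu (C nu) y {1..p+q} = 0" by (rule czero[OF y mu nu]) (use CS[of _ nu] nu odd in \<open>auto simp: cl_S_def\<close>)
      moreover have "cpd nu (C mu) y {1..p+q} = 0" by (rule czero[OF y nu mu]) (use CS[of _ mu] mu odd in \<open>auto simp: cl_S_def\<close>)
      moreover have "comm p q (C mu y) (C nu y) {1..p+q} = 0"
        using commN_zero[OF odd] by (simp add: comm_eq)
      ultimately show ?thesis by simp
    qed
    show ?thesis unfolding cl_S_def cl_carrier_def using car e o by auto
  qed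
  show ?thesis
  proof (rule gens_central_zero[OF gensy[OF y] XS])
    fix a assume "a \<in> {1..p+q}"
    then have "comm p q ?X (h a y) = 0" by (rule c0)
    then show "clmul p q (h a y) ?X = clmul p q ?X (h a y)" by (simp add: comm_eq)
  qed
qed

lemma Gform:
  assumes y: "y \<in> Rpq p q" and mu: "mu \<in> {1..p+q}" and nu: "nu \<in> {1..p+q}"
  shows "cpd mu (B nu) y - cpd nu (B mu) y - comm p q (B mu y) (B nu y) =
         clscale (-(\<sigma> * \<sigma> * eta p mu mu * eta p nu nu)) (comm p q (h mu y) (h nu y))"
proof -
  have Bf: "B m = (\<lambda>y. clscale \<sigma> (clscale (eta p m m) (h m y)) + C m y)" for m
    by (rule ext) (rule B_eq)
  have dB: "cpd a (B b) y = clscale \<sigma> (clscale (eta p b b) (comm p q (C a y) (h b y))) + cpd a (C b) y"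
    if a: "a \<in> {1..p+q}" and b: "b \<in> {1..p+q}" for a b
    unfolding Bf
    by (simp add: cpd_add hp_scale hpH[OF y a b] hpC[OF y a b] cpd_scale E[OF y a b])
  show ?thesis
    unfolding dB[OF mu nu] dB[OF nu mu] B_eq
    by (rule test_S2[OF FC[OF y mu nu]])
qed

end


lemma (in gens) comm_comm:
  assumes a: "a \<in> {1..p+q}" and b: "b \<in> {1..p+q}" and ab: "a \<noteq> b"
  shows "comm p q (g a) (comm p q (g a) (g b)) = clscale (4 * eta p a a) (g b)"
proof -
  have ba: "clmul p q (g b) (g a) = - clmul p q (g a) (g b)" using g_ac[OF b a] ab by simp
  have aab: "clmul p q (g a) (clmul p q (g a) (g b)) = clscale (eta p a a) (g b)"
    by (simp add: clmul_assoc[symmetric] g_sq[OF a] clmul_scale_left clone_left g_car[OF b])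
  have aba: "clmul p q (g a) (clmul p q (g b) (g a)) = - clscale (eta p a a) (g b)"
    by (simp add: ba clmul_neg_right aab)
  have baa: "clmul p q (g b) (clmul p q (g a) (g a)) = clscale (eta p a a) (g b)"
    by (simp add: g_sq[OF a] clmul_scale_right clone_right g_car[OF b])
  show ?thesis
    by (simp add: comm_eq clmul_diff_left clmul_diff_right clmul_assoc aab aba baa)
       (simp add: clscale_def fun_eq_iff algebra_simps)
qed

lemma (in ym) main3:
  fixes G_low G_up :: "nat \<Rightarrow> nat \<Rightarrow> point \<Rightarrow> cl" and \<epsilon> :: complex
  assumes eps: "\<epsilon> = 4 * (of_nat (p+q) - 1) * \<sigma> ^ 3"
    and G_def: "\<forall>mu nu y. G_low mu nu y =
                  clsub (clsub (cpd mu (B nu) y) (cpd nu (B mu) y)) (comm p q (B mu y) (B nu y))"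
    and Gup_def: "\<forall>mu nu y. G_up mu nu y = clscale (eta p mu mu * eta p nu nu) (G_low mu nu y)"
    and x: "x \<in> Rpq p q" and nu: "nu \<in> {1..p+q}"
  shows "(\<lambda>A. \<Sum>mu\<in>{1..p+q}. clsub (cpd mu (G_up mu nu) x) (comm p q (B mu x) (G_up mu nu x)) A)
         = clscale \<epsilon> (h nu x)"
proof -
  have Gup: "G_up mu nu y = clscale (-(\<sigma> * \<sigma>)) (comm p q (h mu y) (h nu y))"
    if y: "y \<in> Rpq p q" and mu: "mu \<in> {1..p+q}" for mu y
  proof -
    have "G_up mu nu y = clscale (eta p mu mu * eta p nu nu) (clscale (-(\<sigma> * \<sigma> * eta p mu mu * eta p nu nu)) (comm p q (h mu y) (h nu y)))"
      using Gup_def G_def Gform[OF y mu nu] by (simp add: cl_ops)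
    also have "\<dots> = clscale ((eta p mu mu * eta p mu mu) * (eta p nu nu * eta p nu nu) * (-(\<sigma> * \<sigma>))) (comm p q (h mu y) (h nu y))"
      by (simp add: clscale_simps mult_ac)
    finally show ?thesis by (simp add: eta_sq)
  qed
  have tm: "clsub (cpd mu (G_up mu nu) x) (comm p q (B mu x) (G_up mu nu x)) =
      clscale (\<sigma> * \<sigma> * \<sigma> * eta p mu mu) (comm p q (h mu x) (comm p q (h mu x) (h nu x)))"
    if mu: "mu \<in> {1..p+q}" for mu
  proof -
    have "cpd mu (G_up mu nu) x = cpd mu (\<lambda>y. clscale (-(\<sigma> * \<sigma>)) (comm p q (h mu y) (h nu y))) x"
      by (rule cpd_line_cong) (rule Gup[OF Rpq_upd'[OF x mu] mu])
    also have "\<dots> = clscale (-(\<sigma> * \<sigma>)) (comm p q (comm p q (C mu x) (h mu x)) (h nu x) + comm p q (h mu x) (comm p q (C mu x) (h nu x)))"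
      unfolding cpd_scale[OF hp_comm[OF hpH[OF x mu mu] hpH[OF x mu nu]]]
        cpd_comm[OF hpH[OF x mu mu] hpH[OF x mu nu]] E[OF x mu mu] E[OF x mu nu] ..
    also have "\<dots> = clscale (-(\<sigma> * \<sigma>)) (comm p q (C mu x) (comm p q (h mu x) (h nu x)))"
      by (simp add: jacobi2)
    finally have dG: "cpd mu (G_up mu nu) x = \<dots>" .
    show ?thesis unfolding dG Gup[OF x mu] B_eq cl_ops by (rule alg_S3)
  qed
  interpret gens p q "\<lambda>rho. h rho x" by (rule gensy[OF x])
  have tm2: "clsub (cpd mu (G_up mu nu) x) (comm p q (B mu x) (G_up mu nu x)) A =
      (if mu = nu then 0 else 4 * \<sigma> ^ 3 * h nu x A)" if mu: "mu \<in> {1..p+q}" for mu A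
  proof (cases "mu = nu")
    case True
    have "comm p q (h mu x) (h nu x) = 0" unfolding True by (simp add: comm_eq)
    then show ?thesis unfolding tm[OF mu] using True by (simp add: comm_eq clmul_zero_right clmul_zero_left clscale_simps)
  next
    case False
    have "clsub (cpd mu (G_up mu nu) x) (comm p q (B mu x) (G_up mu nu x)) =
      clscale ((\<sigma> * \<sigma> * \<sigma>) * (eta p mu mu * eta p mu mu) * 4) (h nu x)"
      unfolding tm[OF mu] comm_comm[OF mu nu False] by (simp add: clscale_simps mult_ac)
    then show ?thesis using False by (simp add: eta_sq clscale_def power3_eq_cube mult_ac)
  qed
  have "(\<lambda>A. \<Sum>mu\<in>{1..p+q}. clsub (cpd mu (G_up mu nu) x) (comm p q (B mu x) (G_up mu nu x)) A) =
        (\<lambda>A. \<Sum>mu\<in>{1..p+q}. if mu = nu then 0 else 4 * \<sigma> ^ 3 * h nu x A)"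
    by (rule ext, rule sum.cong) (auto simp: tm2)
  also have "\<dots> = (\<lambda>A. of_nat (card ({1..p+q} - {nu})) * (4 * \<sigma> ^ 3 * h nu x A))"
  proof (rule ext)
    fix A
    have "(\<Sum>mu\<in>{1..p+q}. if mu = nu then 0 else 4 * \<sigma> ^ 3 * h nu x A) =
          (if nu = nu then 0 else 4 * \<sigma> ^ 3 * h nu x A) + (\<Sum>mu\<in>{1..p+q} - {nu}. if mu = nu then 0 else 4 * \<sigma> ^ 3 * h nu x A)"
      by (rule sum.remove) (use nu in auto)
    also have "(\<Sum>mu\<in>{1..p+q} - {nu}. if mu = nu then 0 else 4 * \<sigma> ^ 3 * h nu x A) =
               (\<Sum>mu\<in>{1..p+q} - {nu}. 4 * \<sigma> ^ 3 * h nu x A)"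
      by (rule sum.cong) auto
    finally show "(\<Sum>mu\<in>{1..p+q}. if mu = nu then 0 else 4 * \<sigma> ^ 3 * h nu x A) =
        of_nat (card ({1..p+q} - {nu})) * (4 * \<sigma> ^ 3 * h nu x A)" by simp
  qed
  also have "\<dots> = clscale \<epsilon> (h nu x)"
  proof -
    have c: "card ({1..p+q} - {nu}) = p + q - 1" using nu by simp
    have "(of_nat (p + q - 1) :: complex) = of_nat (p+q) - 1" using nu by (simp add: of_nat_diff)
    then show ?thesis unfolding c eps by (simp add: clscale_def fun_eq_iff mult_ac)
  qed
  finally show ?thesis .
qed

theorem theorem9:
  fixes p q :: nat
    and h C B G :: "nat \<Rightarrow> point \<Rightarrow> cl"
    and G_up :: "nat \<Rightarrow> nat \<Rightarrow> point \<Rightarrow> cl"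
    and G_low :: "nat \<Rightarrow> nat \<Rightarrow> point \<Rightarrow> cl"
    and \<sigma> \<epsilon> :: complex
  assumes cfv: "clifford_field_vector p q h"
    and h_S: "\<forall>x\<in>Rpq p q. \<forall>mu\<in>{1..p+q}. h mu x \<in> cl_S p q"
    and C_S: "\<forall>x\<in>Rpq p q. \<forall>mu\<in>{1..p+q}. C mu x \<in> cl_S p q"
    and h_C2: "\<forall>mu\<in>{1..p+q}. C2_cl p q (h mu)"
    and C_C2: "\<forall>mu\<in>{1..p+q}. C2_cl p q (C mu)"
    and eq: "\<forall>x\<in>Rpq p q. \<forall>mu\<in>{1..p+q}. \<forall>rho\<in>{1..p+q}.
               clsub (cpd mu (\<lambda>y. clscale (eta p rho rho) (h rho y)) x)
                     (comm p q (C mu x) (clscale (eta p rho rho) (h rho x))) = (\<lambda>A. 0)"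
    and eps: "\<epsilon> = 4 * (of_nat (p+q) - 1) * \<sigma> ^ 3"
    and B_def: "\<forall>mu y. B mu y = cladd (clscale \<sigma> (clscale (eta p mu mu) (h mu y))) (C mu y)"
    and G_def: "\<forall>mu nu y. G_low mu nu y =
                  clsub (clsub (cpd mu (B nu) y) (cpd nu (B mu) y)) (comm p q (B mu y) (B nu y))"
    and Gup_def: "\<forall>mu nu y. G_up mu nu y = clscale (eta p mu mu * eta p nu nu) (G_low mu nu y)"
  shows "(\<forall>x\<in>Rpq p q. \<forall>mu\<in>{1..p+q}. B mu x \<in> cl_S p q) \<and>
         (\<forall>x\<in>Rpq p q. \<forall>mu\<in>{1..p+q}. \<forall>nu\<in>{1..p+q}.
            clsub (clsub (cpd mu (B nu) x) (cpd nu (B mu) x)) (comm p q (B mu x) (B nu x))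
              = G_low mu nu x) \<and>
         (\<forall>x\<in>Rpq p q. \<forall>nu\<in>{1..p+q}.
            (\<lambda>A. \<Sum>mu\<in>{1..p+q}.
                clsub (cpd mu (G_up mu nu) x) (comm p q (B mu x) (G_up mu nu x)) A)
              = clscale \<epsilon> (h nu x))"
proof (intro conjI ballI)
  interpret ym p q h C B \<sigma>
    by unfold_locales (use cfv h_S C_S h_C2 C_C2 eq B_def in \<open>auto simp: cl_ops\<close>)
  fix x assume x: "x \<in> Rpq p q"
  {
    fix mu assume mu: "mu \<in> {1..p+q}"
    show "B mu x \<in> cl_S p q"
      using h_S C_S x mu B_def by (auto simp: cl_S_def cl_carrier_def cladd_def clscale_def)
  }
  {
    fix mu nu assume "mu \<in> {1..p+q}" "nu \<in> {1..p+q}"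
    show "clsub (clsub (cpd mu (B nu) x) (cpd nu (B mu) x)) (comm p q (B mu x) (B nu x)) = G_low mu nu x"
      using G_def by simp
  }
  {
    fix nu assume nu: "nu \<in> {1..p+q}"
    show "(\<lambda>A. \<Sum>mu\<in>{1..p+q}. clsub (cpd mu (G_up mu nu) x) (comm p q (B mu x) (G_up mu nu x)) A) = clscale \<epsilon> (h nu x)"
      by (rule main3[OF eps G_def Gup_def x nu])
  }
qed


end
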